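(* Let $n\ge4$ be even and let $K$ be an algebraically closed field of characteristic $2$. Then the algebra $P^*(\mathbb D_n)$ over $K$ is not symmetric.
   Context: Paths in a quiver are composed from left to right: for arrows $\alpha: i\to j$ and $\beta: j\to k$, $\alpha\beta$ is the path $i\to j\to k$. The quiver $Q_{\mathbb D_n}$ has vertices $0,\dots,n-1$ and arrows $a_0:0\to2$, $\bar a_0:2\to0$, $a_1:1\to2$, $\bar a_1:2\to1$, $a_i:i\to i+1$, $\bar a_i:i+1\to i$ ($2\le i\le n-2$); put $\bar{\bar a}=a$. With $n=2m$, $P^*(\mathbb D_n)=KQ_{\mathbb D_n}/I^*$, where $I^*$ is generated by $\sum_{a\text{ starting at }v}a\bar a$ for all vertices $v\neq2$, together with $\bar a_0a_0+\bar a_1a_1+a_2\bar a_2+(\bar a_0a_0\bar a_1a_1)^{m-1}$ and $(\bar a_0a_0+\bar a_1a_1)^{n-2}$. A finite-dimensional algebra $A$ is symmetric if there is a linear form $\psi:A\to K$ with $\psi(ab)=\psi(ba)$ for all $a,b$ whose kernel contains no nonzero one-sided ideal. *)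

theory Defs
  imports "HOL-Computational_Algebra.Polynomial"
begin

text \<open>Vertices 0..n-1. Between any ordered pair of vertices there is at most one arrow,
  so an arrow is identified with the pair (source, target). Arrows:
  a0: 0->2, abar0: 2->0, a1: 1->2, abar1: 2->1, a_i: i->i+1, abar_i: i+1->i (2 <= i <= n-2).\<close>

definition dn_edge :: "nat \<Rightarrow> nat \<Rightarrow> nat \<Rightarrow> bool" where
  "dn_edge n u v \<longleftrightarrow> (u = 0 \<and> v = 2) \<or> (u = 1 \<and> v = 2) \<or> (2 \<le> u \<and> u \<le> n - 2 \<and> v = u + 1)"

definition dn_arrow :: "nat \<Rightarrow> nat \<Rightarrow> nat \<Rightarrow> bool" where
  "dn_arrow n u v \<longleftrightarrow> u < n \<and> v < n \<and> (dn_edge n u v \<or> dn_edge n v u)"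

text \<open>A path (composed left to right) is the nonempty list of vertices it visits;
  the trivial path at v is [v].\<close>

definition dn_path :: "nat \<Rightarrow> nat list \<Rightarrow> bool" where
  "dn_path n p \<longleftrightarrow> p \<noteq> [] \<and> (\<forall>v\<in>set p. v < n) \<and> successively (dn_arrow n) p"

definition KQ :: "nat \<Rightarrow> (nat list \<Rightarrow> 'a::field) set" where
  "KQ n = {f. finite {p. f p \<noteq> 0} \<and> (\<forall>p. f p \<noteq> 0 \<longrightarrow> dn_path n p)}"

definition pzero :: "nat list \<Rightarrow> 'a::field" where
  "pzero = (\<lambda>_. 0)"

definition padd :: "(nat list \<Rightarrow> 'a::field) \<Rightarrow> (nat list \<Rightarrow> 'a) \<Rightarrow> nat list \<Rightarrow> 'a" where
  "padd f g = (\<lambda>p. f p + g p)"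

definition psmult :: "'a::field \<Rightarrow> (nat list \<Rightarrow> 'a) \<Rightarrow> nat list \<Rightarrow> 'a" where
  "psmult c f = (\<lambda>p. c * f p)"

definition pmult :: "(nat list \<Rightarrow> 'a::field) \<Rightarrow> (nat list \<Rightarrow> 'a) \<Rightarrow> nat list \<Rightarrow> 'a" where
  "pmult f g = (\<lambda>w. \<Sum>(p, q) \<in> {(p, q). f p \<noteq> 0 \<and> g q \<noteq> 0 \<and> p \<noteq> [] \<and> q \<noteq> [] \<and>
                                      last p = hd q \<and> p @ tl q = w}. f p * g q)"

definition pone :: "nat \<Rightarrow> nat list \<Rightarrow> 'a::field" where
  "pone n = (\<lambda>p. if \<exists>v<n. p = [v] then 1 else 0)"

definition pbasis :: "nat list \<Rightarrow> nat list \<Rightarrow> 'a::field" where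
  "pbasis p = (\<lambda>q. if q = p then 1 else 0)"

fun ppow :: "nat \<Rightarrow> (nat list \<Rightarrow> 'a::field) \<Rightarrow> nat \<Rightarrow> nat list \<Rightarrow> 'a" where
  "ppow n f 0 = pone n"
| "ppow n f (Suc k) = pmult (ppow n f k) f"

definition is_subspace :: "nat \<Rightarrow> (nat list \<Rightarrow> 'a::field) set \<Rightarrow> bool" where
  "is_subspace n J \<longleftrightarrow> J \<subseteq> KQ n \<and> pzero \<in> J \<and>
     (\<forall>f\<in>J. \<forall>g\<in>J. padd f g \<in> J) \<and> (\<forall>c. \<forall>f\<in>J. psmult c f \<in> J)"

definition is_left_ideal :: "nat \<Rightarrow> (nat list \<Rightarrow> 'a::field) set \<Rightarrow> bool" where
  "is_left_ideal n J \<longleftrightarrow> is_subspace n J \<and> (\<forall>a\<in>KQ n. \<forall>f\<in>J. pmult a f \<in> J)"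

definition is_right_ideal :: "nat \<Rightarrow> (nat list \<Rightarrow> 'a::field) set \<Rightarrow> bool" where
  "is_right_ideal n J \<longleftrightarrow> is_subspace n J \<and> (\<forall>a\<in>KQ n. \<forall>f\<in>J. pmult f a \<in> J)"

definition is_ideal :: "nat \<Rightarrow> (nat list \<Rightarrow> 'a::field) set \<Rightarrow> bool" where
  "is_ideal n J \<longleftrightarrow> is_left_ideal n J \<and> is_right_ideal n J"

definition gen_ideal :: "nat \<Rightarrow> (nat list \<Rightarrow> 'a::field) set \<Rightarrow> (nat list \<Rightarrow> 'a) set" where
  "gen_ideal n R = \<Inter>{J. is_ideal n J \<and> R \<subseteq> J}"

text \<open>For a vertex v: sum over arrows a starting at v of a abar, i.e. sum over
  neighbours w of the path v -> w -> v.\<close>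

definition vertex_rel :: "nat \<Rightarrow> nat \<Rightarrow> nat list \<Rightarrow> 'a::field" where
  "vertex_rel n v = (\<lambda>p. if \<exists>w. dn_arrow n v w \<and> p = [v, w, v] then 1 else 0)"

definition Istar_gens :: "nat \<Rightarrow> (nat list \<Rightarrow> 'a::field) set" where
  "Istar_gens n =
     {vertex_rel n v | v. v < n \<and> v \<noteq> 2}
   \<union> {padd (vertex_rel n 2)
        (ppow n (pmult (pmult (pbasis [2,0]) (pbasis [0,2])) (pmult (pbasis [2,1]) (pbasis [1,2])))
           (n div 2 - 1))}
   \<union> {ppow n (padd (pmult (pbasis [2,0]) (pbasis [0,2])) (pmult (pbasis [2,1]) (pbasis [1,2]))) (n - 2)}"

definition Istar :: "nat \<Rightarrow> (nat list \<Rightarrow> 'a::field) set" where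
  "Istar n = gen_ideal n (Istar_gens n)"

text \<open>A linear form on KQ/I is a linear form on KQ vanishing on I. One-sided ideals of KQ/I
  correspond to one-sided ideals J of KQ containing I; such an ideal is nonzero iff J is not
  contained in I.\<close>

definition symmetric_quotient :: "nat \<Rightarrow> (nat list \<Rightarrow> 'a::field) set \<Rightarrow> bool" where
  "symmetric_quotient n I \<longleftrightarrow>
    (\<exists>\<psi> :: (nat list \<Rightarrow> 'a) \<Rightarrow> 'a.
       (\<forall>f\<in>KQ n. \<forall>g\<in>KQ n. \<psi> (padd f g) = \<psi> f + \<psi> g) \<and>
       (\<forall>c. \<forall>f\<in>KQ n. \<psi> (psmult c f) = c * \<psi> f) \<and>
       (\<forall>f\<in>I. \<psi> f = 0) \<and>
       (\<forall>a\<in>KQ n. \<forall>b\<in>KQ n. \<psi> (pmult a b) = \<psi> (pmult b a)) \<and>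
       (\<forall>J. (is_left_ideal n J \<or> is_right_ideal n J) \<and> I \<subseteq> J \<and> (\<forall>f\<in>J. \<psi> f = 0)
              \<longrightarrow> J \<subseteq> I))"

end

theory Submission
  imports Defs
begin

definition supp :: "(nat list \<Rightarrow> 'a::field) \<Rightarrow> nat list set" where
  "supp f = {p. f p \<noteq> 0}"

definition ind :: "nat list set \<Rightarrow> nat list \<Rightarrow> 'a::field" where
  "ind S = (\<lambda>p. if p \<in> S then 1 else 0)"

definition cok :: "nat list \<Rightarrow> nat list \<Rightarrow> bool" where
  "cok p q \<longleftrightarrow> p \<noteq> [] \<and> q \<noteq> [] \<and> last p = hd q"

lemma pmult_expand:
  fixes f g :: "nat list \<Rightarrow> 'a::field"
  assumes U: "finite U" and V: "finite V" and fU: "supp f \<subseteq> U" and gV: "supp g \<subseteq> V"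
  shows "pmult f g w = (\<Sum>p\<in>U. \<Sum>q\<in>V. if cok p q \<and> p @ tl q = w then f p * g q else 0)"
proof -
  let ?P = "{(p, q). f p \<noteq> 0 \<and> g q \<noteq> 0 \<and> p \<noteq> [] \<and> q \<noteq> [] \<and> last p = hd q \<and> p @ tl q = w}"
  let ?T = "{pq \<in> U \<times> V. cok (fst pq) (snd pq) \<and> fst pq @ tl (snd pq) = w}"
  have sub: "?P \<subseteq> ?T" using fU gV by (auto simp: supp_def cok_def)
  have fin: "finite ?T" using U V by auto
  have "pmult f g w = (\<Sum>(p,q)\<in>?P. f p * g q)" by (simp add: pmult_def)
  also have "\<dots> = (\<Sum>(p,q)\<in>?T. f p * g q)"
    by (rule sum.mono_neutral_left[OF fin sub]) (auto simp: cok_def)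
  also have "\<dots> = (\<Sum>pq\<in>U \<times> V. if cok (fst pq) (snd pq) \<and> fst pq @ tl (snd pq) = w then f (fst pq) * g (snd pq) else 0)"
    unfolding case_prod_beta by (rule sum.inter_filter[OF finite_cartesian_product[OF U V]])
  also have "\<dots> = (\<Sum>p\<in>U. \<Sum>q\<in>V. if cok p q \<and> p @ tl q = w then f p * g q else 0)"
    by (simp add: sum.cartesian_product case_prod_beta)
  finally show ?thesis .
qed

lemma pmult_nz:
  assumes "pmult f g w \<noteq> 0"
  shows "\<exists>p q. f p \<noteq> 0 \<and> g q \<noteq> 0 \<and> cok p q \<and> w = p @ tl q"
proof (rule ccontr)
  assume "\<not> ?thesis"
  hence E: "{(p, q). f p \<noteq> 0 \<and> g q \<noteq> 0 \<and> p \<noteq> [] \<and> q \<noteq> [] \<and> last p = hd q \<and> p @ tl q = w} = {}"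
    by (auto simp: cok_def)
  show False using assms unfolding pmult_def E by simp
qed

lemma supp_pmult_sub:
  "supp (pmult f g) \<subseteq> (\<lambda>(p,q). p @ tl q) ` (supp f \<times> supp g)"
proof
  fix w assume "w \<in> supp (pmult f g)"
  then obtain p q where "f p \<noteq> 0" "g q \<noteq> 0" "w = p @ tl q"
    using pmult_nz[of f g w] by (auto simp: supp_def)
  thus "w \<in> (\<lambda>(p,q). p @ tl q) ` (supp f \<times> supp g)" by (force simp: supp_def)
qed

lemma finite_supp_pmult:
  "finite (supp f) \<Longrightarrow> finite (supp g) \<Longrightarrow> finite (supp (pmult f g))"
  by (rule finite_subset[OF supp_pmult_sub]) auto

lemma KQ_iff: "f \<in> KQ n \<longleftrightarrow> finite (supp f) \<and> (\<forall>p\<in>supp f. dn_path n p)"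
  by (auto simp: KQ_def supp_def)

lemma dn_path_cat:
  assumes "dn_path n p" "dn_path n q" "last p = hd q"
  shows "dn_path n (p @ tl q)"
proof -
  from assms(2) obtain v r where q: "q = v # r" unfolding dn_path_def by (cases q) auto
  have "successively (dn_arrow n) (p @ r)"
  proof (cases r)
    case Nil thus ?thesis using assms(1) by (simp add: dn_path_def)
  next
    case (Cons w r')
    have "successively (dn_arrow n) (v # w # r')" using assms(2) q Cons by (simp add: dn_path_def)
    thus ?thesis using assms(1,3) q Cons
      by (auto simp: dn_path_def successively_append_iff)
  qed
  thus ?thesis using assms q by (auto simp: dn_path_def)
qed

lemma supp_padd: "supp (padd f g) \<subseteq> supp f \<union> supp g"
  by (auto simp: supp_def padd_def)
lemma supp_psmult: "supp (psmult c f) \<subseteq> supp f"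
  by (auto simp: supp_def psmult_def)

lemma KQ_padd: "f \<in> KQ n \<Longrightarrow> g \<in> KQ n \<Longrightarrow> padd f g \<in> KQ n"
  unfolding KQ_iff using supp_padd[of f g] by (auto intro: finite_subset)
lemma KQ_psmult: "f \<in> KQ n \<Longrightarrow> psmult c f \<in> KQ n"
  unfolding KQ_iff using supp_psmult[of c f] by (auto intro: finite_subset)
lemma KQ_pzero: "pzero \<in> KQ n"
  by (simp add: KQ_def pzero_def)
lemma KQ_pmult:
  assumes "f \<in> KQ n" "g \<in> KQ n" shows "pmult f g \<in> KQ n"
proof -
  have "finite (supp (pmult f g))" using assms by (simp add: KQ_iff finite_supp_pmult)
  moreover have "\<forall>w\<in>supp (pmult f g). dn_path n w"
  proof
    fix w assume "w \<in> supp (pmult f g)"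
    then obtain p q where "f p \<noteq> 0" "g q \<noteq> 0" "cok p q" "w = p @ tl q"
      using pmult_nz[of f g w] by (auto simp: supp_def)
    thus "dn_path n w" using assms dn_path_cat by (auto simp: KQ_def cok_def)
  qed
  ultimately show ?thesis by (simp add: KQ_iff)
qed
lemma KQ_pbasis: "dn_path n p \<Longrightarrow> pbasis p \<in> KQ n"
  by (auto simp: KQ_def pbasis_def)
lemma KQ_ind: "finite S \<Longrightarrow> (\<forall>p\<in>S. dn_path n p) \<Longrightarrow> ind S \<in> KQ n"
  by (auto simp: KQ_def ind_def)
lemma pone_ind: "pone n = ind {[v] | v. v < n}"
  by (rule ext) (auto simp: pone_def ind_def)
lemma KQ_pone: "pone n \<in> KQ n"
proof -
  have "{[v] | v. v < n} = (\<lambda>v. [v]) ` {..<n}" by auto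
  hence "finite {[v] | v. v < n}" by simp
  thus ?thesis unfolding pone_ind by (rule KQ_ind) (auto simp: dn_path_def)
qed
lemma KQ_ppow: "f \<in> KQ n \<Longrightarrow> ppow n f k \<in> KQ n"
  by (induction k) (auto simp: KQ_pone KQ_pmult)

lemma pmult_padd_left:
  assumes "finite (supp f)" "finite (supp g)" "finite (supp a)"
  shows "pmult (padd f g) a = padd (pmult f a) (pmult g a)"
proof
  fix w
  let ?U = "supp f \<union> supp g"
  have fU: "finite ?U" using assms by simp
  show "pmult (padd f g) a w = padd (pmult f a) (pmult g a) w"
    unfolding padd_def
    apply (subst (1 2 3) pmult_expand[OF fU assms(3) _ order_refl])
    using supp_padd[of f g] apply (auto simp: padd_def sum.distrib[symmetric] distrib_right intro!: sum.cong)
    done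
qed

lemma pmult_psmult_left:
  assumes "finite (supp f)" "finite (supp a)"
  shows "pmult (psmult c f) a = psmult c (pmult f a)"
proof
  fix w
  show "pmult (psmult c f) a w = psmult c (pmult f a) w"
    unfolding psmult_def
    apply (subst (1 2) pmult_expand[OF assms(1) assms(2) _ order_refl])
    using supp_psmult[of c f] apply (auto simp: psmult_def sum_distrib_left mult.assoc intro!: sum.cong)
    done
qed

lemma pmult_ind:
  assumes S: "\<forall>p\<in>S. p \<noteq> []" and T: "\<forall>q\<in>T. q \<noteq> []"
    and inj: "inj_on (\<lambda>(p,q). p @ tl q) {(p,q). p \<in> S \<and> q \<in> T \<and> last p = hd q}"
  shows "pmult (ind S) (ind T) = (ind ((\<lambda>(p,q). p @ tl q) ` {(p,q). p \<in> S \<and> q \<in> T \<and> last p = hd q}) :: nat list \<Rightarrow> 'a::field)"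
proof
  fix w
  let ?D = "{(p,q). p \<in> S \<and> q \<in> T \<and> last p = hd q}"
  let ?c = "\<lambda>(p::nat list,q::nat list). p @ tl q"
  have P: "{(p, q). (ind S p::'a) \<noteq> 0 \<and> (ind T q::'a) \<noteq> 0 \<and> p \<noteq> [] \<and> q \<noteq> [] \<and> last p = hd q \<and> p @ tl q = w}
      = {x \<in> ?D. ?c x = w}" using S T by (auto simp: ind_def)
  show "pmult (ind S) (ind T) w = (ind (?c ` ?D) :: nat list \<Rightarrow> 'a) w"
  proof (cases "w \<in> ?c ` ?D")
    case True
    then obtain x where x: "x \<in> ?D" "?c x = w" by blast
    have "{x \<in> ?D. ?c x = w} = {x}" using x inj by (auto simp: inj_on_def)
    thus ?thesis using x True unfolding pmult_def P by (auto simp: ind_def case_prod_beta)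
  next
    case False
    hence E: "{x \<in> ?D. ?c x = w} = {}" by auto
    show ?thesis using False unfolding pmult_def P E by (simp add: ind_def)
  qed
qed

lemma pbasis_ind: "pbasis p = ind {p}"
  by (rule ext) (simp add: pbasis_def ind_def)

lemma pmult_pbasis:
  assumes "p \<noteq> []" "q \<noteq> []" "last p = hd q"
  shows "pmult (pbasis p) (pbasis q) = pbasis (p @ tl q)"
proof -
  have "{(p',q'). p' \<in> {p} \<and> q' \<in> {q} \<and> last p' = hd q'} = {(p,q)}" using assms by auto
  thus ?thesis unfolding pbasis_ind using assms by (subst pmult_ind) (auto simp: inj_on_def)
qed

lemma pmult_pbasis_ne:
  assumes "last p \<noteq> hd q"
  shows "pmult (pbasis p) (pbasis q) = pzero"
  using assms by (auto simp: pmult_def pbasis_def pzero_def)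

lemma pmult_pone_left:
  assumes "\<forall>q\<in>T. q \<noteq> [] \<and> hd q < n"
  shows "pmult (pone n) (ind T) = ind T"
proof -
  have "(\<lambda>(p,q). p @ tl q) ` {(p,q). p \<in> {[v] | v. v < n} \<and> q \<in> T \<and> last p = hd q} = T"
  proof (rule set_eqI, rule iffI)
    fix q assume "q \<in> T"
    hence "q = [hd q] @ tl q" using assms by auto
    thus "q \<in> (\<lambda>(p,q). p @ tl q) ` {(p,q). p \<in> {[v] | v. v < n} \<and> q \<in> T \<and> last p = hd q}"
      using \<open>q \<in> T\<close> assms by (auto intro!: image_eqI[of _ _ "([hd q], q)"])
  next
    fix w assume "w \<in> (\<lambda>(p,q). p @ tl q) ` {(p,q). p \<in> {[v] | v. v < n} \<and> q \<in> T \<and> last p = hd q}"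
    then obtain v q where "q \<in> T" "last [v] = hd q" "w = [v] @ tl q" by auto
    thus "w \<in> T" using assms by (cases q) auto
  qed
  moreover have "inj_on (\<lambda>(p,q). p @ tl q) {(p,q). p \<in> {[v] | v. v < n} \<and> q \<in> T \<and> last p = hd q}"
    using assms by (auto simp: inj_on_def)
  ultimately show ?thesis unfolding pone_ind using assms by (subst pmult_ind) auto
qed



definition NN :: "nat \<Rightarrow> nat" where "NN n = 2 * n - 4"
definition Wv :: "nat \<Rightarrow> nat" where
  "Wv l = (if l mod 4 = 0 then 0 else if l mod 4 = 2 then 1 else 2)"

fun vtx :: "nat \<times> nat \<Rightarrow> nat" where
  "vtx (l, h) = (if h = 0 then Wv l else h + 2)"

fun step :: "nat \<Rightarrow> nat \<times> nat \<Rightarrow> nat \<Rightarrow> (nat \<times> nat) option" where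
  "step n (l, h) v =
    (if h = 0 then
       (if l + 1 \<le> NN n \<and> v = Wv (l + 1) then Some (l + 1, 0)
        else if odd l \<and> v = 3 \<and> l + 3 \<le> NN n then Some (l, 1) else None)
     else if odd l \<and> v = h + 3 \<and> l + 2 * h + 3 \<le> NN n then Some (l, h + 1)
     else if odd l \<and> v = h + 1 then Some (l + 2, h - 1) else None)"

fun run :: "nat \<Rightarrow> nat \<times> nat \<Rightarrow> nat list \<Rightarrow> (nat \<times> nat) option" where
  "run n st [] = None"
| "run n st [v] = (if vtx st = v then Some st else None)"
| "run n st (v # w # r) =
     (if vtx st = v then (case step n st w of None \<Rightarrow> None | Some s' \<Rightarrow> run n s' (w # r)) else None)"

lemma run_Some: "run n st p = Some st' \<Longrightarrow> p \<noteq> [] \<and> vtx st = hd p \<and> vtx st' = last p"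
  by (induction n st p rule: run.induct) (auto split: if_splits option.splits)

lemma run_hd_ne: "vtx st \<noteq> v \<Longrightarrow> run n st (v # r) = None"
  by (cases r) auto

lemma run_cat:
  assumes "p \<noteq> []" "q \<noteq> []" "last p = hd q"
  shows "run n st (p @ tl q) = (case run n st p of None \<Rightarrow> None | Some s \<Rightarrow> run n s q)"
  using assms
proof (induction p arbitrary: st)
  case Nil thus ?case by simp
next
  case (Cons v p)
  show ?case
  proof (cases p)
    case Nil
    hence q: "q = v # tl q" using Cons.prems by (cases q) auto
    show ?thesis using Nil run_hd_ne[of st v n "tl q"] by (subst q) (auto simp: q[symmetric])
  next
    case (Cons w p')
    show ?thesis using Cons.IH[of] Cons.prems \<open>p = w # p'\<close>
      by (auto split: option.splits)
  qed
qed

definition phi :: "nat \<Rightarrow> (nat list \<Rightarrow> 'a::field) \<Rightarrow> nat \<times> nat \<Rightarrow> nat \<times> nat \<Rightarrow> 'a" where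
  "phi n f st st' = (\<Sum>p | f p \<noteq> 0 \<and> run n st p = Some st'. f p)"

lemma phi_expand:
  assumes "finite U" "supp f \<subseteq> U"
  shows "phi n f st st' = (\<Sum>p\<in>U. if run n st p = Some st' then f p else 0)"
proof -
  have "phi n f st st' = (\<Sum>p\<in>{p\<in>U. run n st p = Some st'}. f p)"
    unfolding phi_def
    by (rule sum.mono_neutral_left) (use assms in \<open>auto simp: supp_def\<close>)
  also have "\<dots> = (\<Sum>p\<in>U. if run n st p = Some st' then f p else 0)"
    by (rule sum.inter_filter[OF assms(1)])
  finally show ?thesis .
qed

lemma phi_padd:
  assumes "finite (supp f)" "finite (supp g)"
  shows "phi n (padd f g) st st' = phi n f st st' + phi n g st st'"
proof -
  have U: "finite (supp f \<union> supp g)" using assms by simp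
  show ?thesis
    apply (subst (1 2 3) phi_expand[OF U])
    using supp_padd[of f g] by (auto simp: padd_def sum.distrib[symmetric] intro!: sum.cong)
qed

lemma phi_psmult:
  assumes "finite (supp f)"
  shows "phi n (psmult c f) st st' = c * phi n f st st'"
  apply (subst (1 2) phi_expand[OF assms])
  using supp_psmult[of c f] by (auto simp: psmult_def sum_distrib_left intro!: sum.cong)

lemma phi_pzero: "phi n pzero st st' = 0"
  by (simp add: phi_def pzero_def)

lemma phi_pbasis: "phi n (pbasis w) st st' = (if run n st w = Some st' then 1 else 0)"
  by (subst phi_expand[of "{w}"]) (auto simp: supp_def pbasis_def)

lemma phi_pmult1:
  fixes f g :: "nat list \<Rightarrow> 'a::field"
  assumes fU: "finite (supp f)" and fV: "finite (supp g)"
  shows "phi n (pmult f g) st st'' =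
     (\<Sum>p\<in>supp f. case run n st p of None \<Rightarrow> 0 | Some s \<Rightarrow> f p * phi n g s st'')"
proof -
  let ?U = "supp f" and ?V = "supp g"
  let ?W = "(\<lambda>(p,q). p @ tl q) ` (?U \<times> ?V)"
  have finW: "finite ?W" using fU fV by simp
  let ?F = "\<lambda>w p q. if run n st w = Some st'' \<and> cok p q \<and> p @ tl q = w then f p * g q else 0"
  have "phi n (pmult f g) st st'' = (\<Sum>w\<in>?W. if run n st w = Some st'' then pmult f g w else 0)"
    by (rule phi_expand[OF finW supp_pmult_sub])
  also have "\<dots> = (\<Sum>w\<in>?W. \<Sum>p\<in>?U. \<Sum>q\<in>?V. ?F w p q)"
  proof (rule sum.cong[OF refl])
    fix w show "(if run n st w = Some st'' then pmult f g w else 0) = (\<Sum>p\<in>?U. \<Sum>q\<in>?V. ?F w p q)"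
      by (cases "run n st w = Some st''") (simp_all add: pmult_expand[OF fU fV order_refl order_refl])
  qed
  also have "\<dots> = (\<Sum>p\<in>?U. \<Sum>w\<in>?W. \<Sum>q\<in>?V. ?F w p q)" by (rule sum.swap)
  also have "\<dots> = (\<Sum>p\<in>?U. \<Sum>q\<in>?V. \<Sum>w\<in>?W. ?F w p q)" by (rule sum.cong[OF refl], rule sum.swap)
  also have "\<dots> = (\<Sum>p\<in>?U. \<Sum>q\<in>?V. if cok p q \<and> run n st (p @ tl q) = Some st'' then f p * g q else 0)"
  proof (intro sum.cong[OF refl])
    fix p q assume pq: "p \<in> ?U" "q \<in> ?V"
    have "(\<Sum>w\<in>?W. ?F w p q) = (\<Sum>w\<in>?W. if p @ tl q = w then (if run n st w = Some st'' \<and> cok p q then f p * g q else 0) else 0)"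
      by (rule sum.cong) auto
    also have "\<dots> = (if cok p q \<and> run n st (p @ tl q) = Some st'' then f p * g q else 0)"
      using pq by (subst sum.delta'[OF finW]) (force simp: image_iff)
    finally show "(\<Sum>w\<in>?W. ?F w p q) = (if cok p q \<and> run n st (p @ tl q) = Some st'' then f p * g q else 0)" .
  qed
  also have "\<dots> = (\<Sum>p\<in>?U. \<Sum>q\<in>?V. case run n st p of None \<Rightarrow> 0 | Some s \<Rightarrow> (if run n s q = Some st'' then f p * g q else 0))"
  proof (intro sum.cong[OF refl])
    fix p q
    show "(if cok p q \<and> run n st (p @ tl q) = Some st'' then f p * g q else 0) =
      (case run n st p of None \<Rightarrow> 0 | Some s \<Rightarrow> (if run n s q = Some st'' then f p * g q else 0))"
    proof (cases "run n st p")
      case None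
      thus ?thesis by (auto simp: cok_def run_cat)
    next
      case (Some s)
      hence p: "p \<noteq> []" "vtx s = last p" using run_Some by auto
      show ?thesis
      proof (cases "run n s q = Some st''")
        case True
        hence "q \<noteq> []" "vtx s = hd q" using run_Some by auto
        thus ?thesis using p Some True by (auto simp: cok_def run_cat)
      next
        case False
        thus ?thesis using p Some by (auto simp: cok_def run_cat)
      qed
    qed
  qed
  also have "\<dots> = (\<Sum>p\<in>?U. case run n st p of None \<Rightarrow> 0 | Some s \<Rightarrow> f p * phi n g s st'')"
  proof (intro sum.cong[OF refl])
    fix p
    show "(\<Sum>q\<in>?V. case run n st p of None \<Rightarrow> 0 | Some s \<Rightarrow> (if run n s q = Some st'' then f p * g q else 0)) =
      (case run n st p of None \<Rightarrow> 0 | Some s \<Rightarrow> f p * phi n g s st'')"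
      by (cases "run n st p") (auto simp: phi_expand[OF fV order_refl] sum_distrib_left intro!: sum.cong)
  qed
  finally show ?thesis .
qed

lemma phi_pmult:
  fixes f g :: "nat list \<Rightarrow> 'a::field"
  assumes fU: "finite (supp f)" and fV: "finite (supp g)"
  shows "phi n (pmult f g) st st'' =
     (\<Sum>s\<in>(\<lambda>p. the (run n st p)) ` {p\<in>supp f. run n st p \<noteq> None}. phi n f st s * phi n g s st'')"
proof -
  let ?R = "(\<lambda>p. the (run n st p)) ` {p\<in>supp f. run n st p \<noteq> None}"
  have finR: "finite ?R" using fU by simp
  have "(\<Sum>s\<in>?R. phi n f st s * phi n g s st'') =
      (\<Sum>s\<in>?R. \<Sum>p\<in>supp f. if run n st p = Some s then f p * phi n g s st'' else 0)"
    by (intro sum.cong[OF refl]) (auto simp: phi_expand[OF fU order_refl] sum_distrib_right intro!: sum.cong)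
  also have "\<dots> = (\<Sum>p\<in>supp f. \<Sum>s\<in>?R. if run n st p = Some s then f p * phi n g s st'' else 0)"
    by (rule sum.swap)
  also have "\<dots> = (\<Sum>p\<in>supp f. case run n st p of None \<Rightarrow> 0 | Some s \<Rightarrow> f p * phi n g s st'')"
  proof (intro sum.cong[OF refl])
    fix p assume p: "p \<in> supp f"
    show "(\<Sum>s\<in>?R. if run n st p = Some s then f p * phi n g s st'' else 0) =
       (case run n st p of None \<Rightarrow> 0 | Some s \<Rightarrow> f p * phi n g s st'')"
    proof (cases "run n st p")
      case None thus ?thesis by simp
    next
      case (Some s0)
      have "s0 \<in> ?R" using p Some by (force intro: image_eqI[of _ _ p])
      thus ?thesis using Some finR by (simp add: sum.delta)
    qed
  qed
  finally show ?thesis using phi_pmult1[OF fU fV] by simp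
qed



lemma KQ_finite: "f \<in> KQ n \<Longrightarrow> finite (supp f)"
  by (simp add: KQ_iff)

lemma gen_ideal_mem: "f \<in> gen_ideal n R \<longleftrightarrow> (\<forall>J. is_ideal n J \<and> R \<subseteq> J \<longrightarrow> f \<in> J)"
  by (auto simp: gen_ideal_def)

lemma gen_ideal_sub: "is_ideal n J \<Longrightarrow> R \<subseteq> J \<Longrightarrow> gen_ideal n R \<subseteq> J"
  by (auto simp: gen_ideal_def)

lemma gen_ideal_gen: "g \<in> R \<Longrightarrow> g \<in> gen_ideal n R"
  by (auto simp: gen_ideal_def)

lemma gen_ideal_padd: "f \<in> gen_ideal n R \<Longrightarrow> g \<in> gen_ideal n R \<Longrightarrow> padd f g \<in> gen_ideal n R"
  by (auto simp: gen_ideal_def is_ideal_def is_left_ideal_def is_subspace_def)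
lemma gen_ideal_psmult: "f \<in> gen_ideal n R \<Longrightarrow> psmult c f \<in> gen_ideal n R"
  by (auto simp: gen_ideal_def is_ideal_def is_left_ideal_def is_subspace_def)
lemma gen_ideal_pzero: "pzero \<in> gen_ideal n R"
  by (auto simp: gen_ideal_def is_ideal_def is_left_ideal_def is_subspace_def)
lemma gen_ideal_left: "a \<in> KQ n \<Longrightarrow> f \<in> gen_ideal n R \<Longrightarrow> pmult a f \<in> gen_ideal n R"
  by (auto simp: gen_ideal_def is_ideal_def is_left_ideal_def)
lemma gen_ideal_right: "a \<in> KQ n \<Longrightarrow> f \<in> gen_ideal n R \<Longrightarrow> pmult f a \<in> gen_ideal n R"
  by (auto simp: gen_ideal_def is_ideal_def is_right_ideal_def)

lemma KQ_ideal: "is_ideal n (KQ n :: (nat list \<Rightarrow> 'a::field) set)"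
  by (auto simp: is_ideal_def is_left_ideal_def is_right_ideal_def is_subspace_def
      KQ_pzero KQ_padd KQ_psmult KQ_pmult)

lemma gen_ideal_KQ: "R \<subseteq> KQ n \<Longrightarrow> gen_ideal n R \<subseteq> KQ n"
  by (rule gen_ideal_sub[OF KQ_ideal])

definition J0 :: "nat \<Rightarrow> (nat list \<Rightarrow> 'a::field) set" where
  "J0 n = {f \<in> KQ n. \<forall>st st'. phi n f st st' = 0}"

lemma J0_ideal: "is_ideal n (J0 n :: (nat list \<Rightarrow> 'a::field) set)"
proof -
  have sub: "is_subspace n (J0 n)"
    unfolding is_subspace_def J0_def
    by (auto simp: KQ_pzero KQ_padd KQ_psmult phi_pzero phi_padd phi_psmult KQ_finite)
  have l: "\<forall>a\<in>(KQ n :: (nat list \<Rightarrow> 'a) set). \<forall>f\<in>J0 n. pmult a f \<in> J0 n"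
  proof (intro ballI)
    fix a f :: "nat list \<Rightarrow> 'a" assume a: "a \<in> KQ n" and f: "f \<in> J0 n"
    have "\<forall>st st'. phi n (pmult a f) st st' = 0"
    proof (intro allI)
      fix st st'
      show "phi n (pmult a f) st st' = 0"
        using f a by (subst phi_pmult) (auto simp: J0_def KQ_finite simp del: split_paired_All)
    qed
    thus "pmult a f \<in> J0 n" using a f by (auto simp: J0_def KQ_pmult simp del: split_paired_All)
  qed
  have r: "\<forall>a\<in>(KQ n :: (nat list \<Rightarrow> 'a) set). \<forall>f\<in>J0 n. pmult f a \<in> J0 n"
  proof (intro ballI)
    fix a f :: "nat list \<Rightarrow> 'a" assume a: "a \<in> KQ n" and f: "f \<in> J0 n"
    have "\<forall>st st'. phi n (pmult f a) st st' = 0"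
    proof (intro allI)
      fix st st'
      show "phi n (pmult f a) st st' = 0"
        using f a by (subst phi_pmult) (auto simp: J0_def KQ_finite simp del: split_paired_All)
    qed
    thus "pmult f a \<in> J0 n" using a f by (auto simp: J0_def KQ_pmult simp del: split_paired_All)
  qed
  show ?thesis using sub l r by (simp add: is_ideal_def is_left_ideal_def is_right_ideal_def)
qed

lemma phi_pmult_nz:
  assumes "finite (supp f)" "finite (supp g)" "phi n (pmult f g) st st'' \<noteq> 0"
  shows "\<exists>s. phi n f st s \<noteq> 0 \<and> phi n g s st'' \<noteq> 0"
proof (rule ccontr)
  assume "\<not> ?thesis"
  hence h: "\<And>s. phi n f st s * phi n g s st'' = 0" by (metis mult_zero_left mult_zero_right)
  have "phi n (pmult f g) st st'' = 0" unfolding phi_pmult[OF assms(1,2)]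
    by (rule sum.neutral) (use h in blast)
  thus False using assms(3) by simp
qed

lemma phi_pone_nz:
  assumes a: "phi n (pone n :: nat list \<Rightarrow> 'a::field) st st' \<noteq> 0"
  shows "st' = st"
proof -
  obtain p where p: "p \<in> {p. pone n p \<noteq> (0::'a) \<and> run n st p = Some st'}"
    using a[unfolded phi_def] by (rule sum.not_neutral_contains_not_neutral)
  then obtain v where "p = [v]" by (auto simp: pone_def split: if_splits)
  thus "st' = st" using p by (simp split: if_splits)
qed

lemma ppow_shift:
  fixes f :: "nat list \<Rightarrow> 'a::field"
  assumes fin: "finite (supp f)"
    and sh: "\<And>st st'. phi n f st st' \<noteq> 0 \<Longrightarrow> fst st' = fst st + d \<and> odd (fst st') \<and> fst st' \<le> NN n"
  shows "phi n (ppow n f k) st st' \<noteq> 0 \<Longrightarrow> fst st' = fst st + k * d \<and> (k \<ge> 1 \<longrightarrow> odd (fst st') \<and> fst st' \<le> NN n)"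
proof (induction k arbitrary: st')
  case 0
  hence "st' = st" using phi_pone_nz[of n st st'] by simp
  thus ?case by simp
next
  case (Suc k)
  have finp: "finite (supp (ppow n f k))"
    by (induction k) (simp_all add: finite_supp_pmult fin KQ_finite[OF KQ_pone])
  have "phi n (pmult (ppow n f k) f) st st' \<noteq> 0" using Suc.prems by simp
  from phi_pmult_nz[OF finp fin this] obtain s where
    s: "phi n (ppow n f k) st s \<noteq> 0" "phi n f s st' \<noteq> 0" by blast
  have a: "fst s = fst st + k * d" using Suc.IH[OF s(1)] by blast
  have b: "fst st' = fst s + d \<and> odd (fst st') \<and> fst st' \<le> NN n" using sh[OF s(2)] .
  show ?case
  proof (intro conjI impI)
    show "fst st' = fst st + Suc k * d" using a b by simp
    show "odd (fst st')" using b by blast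
    show "fst st' \<le> NN n" using b by blast
  qed
qed



lemma Wv_simps: "Wv l = 0 \<longleftrightarrow> l mod 4 = 0" "Wv l = 1 \<longleftrightarrow> l mod 4 = 2" "Wv l = 2 \<longleftrightarrow> odd l"
  "Wv l \<noteq> 3" "Wv l < 3"
  by (auto simp: Wv_def) presburger+

lemma R0: "run n st [0,2,0] = None"
proof (cases st)
  case (Pair l h)
  show ?thesis using Pair by (auto simp: Wv_simps) presburger+
qed

lemma R1: "run n (l, h) [1,2,1] = None"
proof (cases "vtx (l, h) = 1")
  case False thus ?thesis by simp
next
  case True
  hence h: "h = 0" and l: "l mod 4 = 2" using Wv_simps[of l] by (auto split: if_splits)
  have "Wv (l+1) = 2" "Wv (l+2) = 0" using l by (simp_all add: Wv_simps) presburger+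
  thus ?thesis using h by simp
qed

lemma vtx_ge3: "vtx (l, h) = k \<Longrightarrow> k \<ge> 3 \<Longrightarrow> h = k - 2"
  using Wv_simps(5)[of l] by (auto split: if_splits)

lemma Rk_left:
  assumes "k \<ge> 3"
  shows "run n (l, h) [k, k-1, k] = (if vtx (l, h) = k \<and> odd l \<and> l + 2 * (k-2) + 3 \<le> NN n
      then Some (l + 2, k - 2) else None)"
proof (cases "vtx (l, h) = k")
  case False thus ?thesis by simp
next
  case True
  hence h: "h = k - 2" using vtx_ge3 assms by blast
  show ?thesis
  proof (cases "k = 3")
    case True thus ?thesis using h by (simp add: Wv_simps)
  next
    case False
    hence "h \<ge> 2" using h assms by simp
    thus ?thesis using h assms by (simp add: Wv_simps)
  qed
qed

lemma Rk_right:
  assumes "k \<ge> 3"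
  shows "run n (l, h) [k, k+1, k] = (if vtx (l, h) = k \<and> odd l \<and> l + 2 * (k-2) + 3 \<le> NN n
      then Some (l + 2, k - 2) else None)"
proof (cases "vtx (l, h) = k")
  case False thus ?thesis by simp
next
  case True
  hence h: "h = k - 2" using vtx_ge3 assms by blast
  thus ?thesis using assms by auto
qed

lemma Rk_eq: "k \<ge> 3 \<Longrightarrow> run n st [k, k-1, k] = run n st [k, k+1, k]"
  by (cases st) (simp only: Rk_left Rk_right)

lemma Rleaf:
  assumes "n \<ge> 4"
  shows "run n st [n-1, n-2, n-1] = None"
proof (cases st)
  case (Pair l h)
  have "n - 2 = (n-1) - 1" by simp
  hence "run n st [n-1, n-2, n-1] = run n (l,h) [n-1, (n-1)-1, n-1]" using Pair by simp
  also have "\<dots> = None" using assms by (subst Rk_left) (auto simp: NN_def)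
  finally show ?thesis .
qed

lemma vtx2: "vtx (l, h) = 2 \<longleftrightarrow> h = 0 \<and> odd l"
  using Wv_simps[of l] by auto

lemma RX: "run n (l, h) [2,0,2] = (if h = 0 \<and> l mod 4 = 3 \<and> l + 2 \<le> NN n then Some (l+2, 0) else None)"
proof (cases "vtx (l, h) = 2")
  case False
  hence "run n (l, h) [2,0,2] = None" by simp
  moreover have "\<not> (h = 0 \<and> odd l)" using False vtx2 by simp
  hence "\<not> (h = 0 \<and> l mod 4 = 3)" by presburger
  ultimately show ?thesis by (smt (verit))
next
  case True
  hence h: "h = 0" "odd l" using vtx2 by auto
  have a: "Wv (l+1) = 0 \<longleftrightarrow> l mod 4 = 3" unfolding Wv_simps by presburger
  have b: "Wv (l+2) = 2" using h unfolding Wv_simps by simp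
  show ?thesis using h a b by (auto simp: Wv_simps)
qed

lemma RY: "run n (l, h) [2,1,2] = (if h = 0 \<and> l mod 4 = 1 \<and> l + 2 \<le> NN n then Some (l+2, 0) else None)"
proof (cases "vtx (l, h) = 2")
  case False
  hence "run n (l, h) [2,1,2] = None" by simp
  moreover have "\<not> (h = 0 \<and> odd l)" using False vtx2 by simp
  hence "\<not> (h = 0 \<and> l mod 4 = 1)" by presburger
  ultimately show ?thesis by (smt (verit))
next
  case True
  hence h: "h = 0" "odd l" using vtx2 by auto
  have b: "Wv (l+2) = 2" using h unfolding Wv_simps by simp
  show ?thesis
  proof (cases "l mod 4 = 1")
    case True
    hence a: "Wv (l+1) = 1" unfolding Wv_simps by presburger
    have c: "Wv l = 2" using h unfolding Wv_simps by simp
    show ?thesis using h a b c True by simp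
  next
    case False
    hence a: "Wv (l+1) = 0" using h unfolding Wv_simps by presburger
    show ?thesis using h a b False by simp
  qed
qed

lemma RZ: "run n (l, h) [2,3,2] = (if h = 0 \<and> odd l \<and> l + 3 \<le> NN n then Some (l+2, 0) else None)"
proof (cases "vtx (l, h) = 2")
  case False
  hence "run n (l, h) [2,3,2] = None" by simp
  moreover have "\<not> (h = 0 \<and> odd l)" using False vtx2 by simp
  ultimately show ?thesis by (smt (verit))
next
  case True
  hence h: "h = 0" "odd l" using vtx2 by auto
  have b: "Wv (l+2) = 2" using h unfolding Wv_simps by simp
  show ?thesis using h b by (auto simp: Wv_simps)
qed

lemma R2:
  assumes "NN n mod 4 = 0"
  shows "(run n st [2,0,2] = run n st [2,3,2] \<and> run n st [2,1,2] = None) \<or>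
         (run n st [2,1,2] = run n st [2,3,2] \<and> run n st [2,0,2] = None)"
proof (cases st)
  case (Pair l h)
  show ?thesis
  proof (cases "h = 0 \<and> odd l")
    case False
    hence "\<not> (h = 0 \<and> l mod 4 = 3)" "\<not> (h = 0 \<and> l mod 4 = 1)" by presburger+
    hence "run n (l,h) [2,0,2] = None" "run n (l,h) [2,1,2] = None" "run n (l,h) [2,3,2] = None"
      unfolding RX RY RZ using False by auto
    thus ?thesis unfolding Pair by simp
  next
    case True
    hence "l mod 4 = 1 \<or> l mod 4 = 3" by presburger
    thus ?thesis
    proof
      assume l: "l mod 4 = 1"
      have "l + 2 \<le> NN n \<longleftrightarrow> l + 3 \<le> NN n" using l assms by presburger
      thus ?thesis unfolding Pair RX RY RZ using True l by simp
    next
      assume l: "l mod 4 = 3"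
      have "l + 2 \<le> NN n \<longleftrightarrow> l + 3 \<le> NN n" using l assms by presburger
      thus ?thesis unfolding Pair RX RY RZ using True l by simp
    qed
  qed
qed

lemma Ra:
  assumes "a = 0 \<or> a = 1" "run n st [2,a,2] = Some st'"
  shows "fst st' = fst st + 2 \<and> odd (fst st') \<and> fst st' \<le> NN n"
proof (cases st)
  case (Pair l h)
  show ?thesis using assms unfolding Pair
    by (auto simp: RX RY Wv_simps split: if_splits)
qed

lemma Rxy:
  assumes "run n st [2,0,2,1,2] = Some st'"
  shows "fst st' = fst st + 4 \<and> odd (fst st') \<and> fst st' \<le> NN n"
proof -
  have "run n st [2,0,2,1,2] = run n st ([2,0,2] @ tl [2,1,2])" by simp
  also have "\<dots> = (case run n st [2,0,2] of None \<Rightarrow> None | Some s \<Rightarrow> run n s [2,1,2])"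
    by (rule run_cat) auto
  finally obtain s where s: "run n st [2,0,2] = Some s" "run n s [2,1,2] = Some st'"
    using assms by (auto split: option.splits)
  have a1: "fst s = fst st + 2 \<and> odd (fst s) \<and> fst s \<le> NN n" by (rule Ra[of 0]) (use s in auto)
  have a2: "fst st' = fst s + 2 \<and> odd (fst st') \<and> fst st' \<le> NN n" by (rule Ra[of 1]) (use s in auto)
  show ?thesis
  proof (intro conjI)
    show "fst st' = fst st + 4" using a1 a2 by simp
  qed (use a2 in blast)+
qed

lemma Rsoc: "k \<le> NN n \<Longrightarrow> run n (0,0) (map Wv [0..<k+1]) = Some (k, 0)"
proof (induction k)
  case 0 thus ?case by (simp add: Wv_def)
next
  case (Suc k)
  have eq: "map Wv [0..<Suc k + 1] = map Wv [0..<k+1] @ tl [Wv k, Wv (Suc k)]" by simp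
  have lst: "last (map Wv [0..<k+1]) = Wv k"
    by (subst last_map) (simp_all del: upt_Suc)
  have "run n (0,0) (map Wv [0..<Suc k + 1]) = run n (0,0) (map Wv [0..<k+1] @ tl [Wv k, Wv (Suc k)])"
    by (simp only: eq)
  also have "\<dots> = (case run n (0,0) (map Wv [0..<k+1]) of None \<Rightarrow> None | Some s \<Rightarrow> run n s [Wv k, Wv (Suc k)])"
    by (rule run_cat) (use lst in \<open>simp_all del: upt_Suc\<close>)
  also have "\<dots> = run n (k,0) [Wv k, Wv (Suc k)]" using Suc by simp
  also have "\<dots> = Some (Suc k, 0)" using Suc.prems by simp
  finally show ?case .
qed



lemma adj:
  assumes "n \<ge> 4" "v < n"
  shows "dn_arrow n v w \<longleftrightarrow> (v = 0 \<and> w = 2) \<or> (v = 1 \<and> w = 2) \<or> (v = 2 \<and> (w = 0 \<or> w = 1 \<or> w = 3))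
     \<or> (v \<ge> 3 \<and> (w = v - 1 \<or> (w = v + 1 \<and> v + 1 < n)))"
  using assms unfolding dn_arrow_def dn_edge_def by auto

lemma vertex_rel_ind: "vertex_rel n v = ind {[v,w,v] | w. dn_arrow n v w}"
  by (rule ext) (auto simp: vertex_rel_def ind_def)

lemma VR0: "n \<ge> 4 \<Longrightarrow> vertex_rel n 0 = pbasis [0,2,0]"
  unfolding vertex_rel_ind pbasis_ind by (rule arg_cong[where f=ind]) (auto simp: adj)

lemma VR1: "n \<ge> 4 \<Longrightarrow> vertex_rel n 1 = pbasis [1,2,1]"
  unfolding vertex_rel_ind pbasis_ind by (rule arg_cong[where f=ind]) (auto simp: adj)

lemma VRl: "n \<ge> 4 \<Longrightarrow> vertex_rel n (n-1) = pbasis [n-1,n-2,n-1]"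
  unfolding vertex_rel_ind pbasis_ind by (rule arg_cong[where f=ind]) (auto simp: adj)

lemma VR2: "n \<ge> 4 \<Longrightarrow> vertex_rel n 2 = padd (padd (pbasis [2,0,2]) (pbasis [2,1,2])) (pbasis [2,3,2])"
  by (rule ext) (auto simp: vertex_rel_def adj padd_def pbasis_def)

lemma VRk: "n \<ge> 4 \<Longrightarrow> 3 \<le> k \<Longrightarrow> k + 1 < n \<Longrightarrow>
    vertex_rel n k = padd (pbasis [k,k-1,k]) (pbasis [k,k+1,k])"
  by (rule ext) (auto simp: vertex_rel_def adj padd_def pbasis_def)

lemma char2: "CHAR('a::field) = 2 \<Longrightarrow> (2::'a) = 0"
  by (metis of_nat_CHAR of_nat_numeral)

lemma dnp: "n \<ge> 4 \<Longrightarrow> dn_path n [2,0]" "n \<ge> 4 \<Longrightarrow> dn_path n [0,2]"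
  "n \<ge> 4 \<Longrightarrow> dn_path n [2,1]" "n \<ge> 4 \<Longrightarrow> dn_path n [1,2]"
  "n \<ge> 4 \<Longrightarrow> dn_path n [2,3]" "n \<ge> 4 \<Longrightarrow> dn_path n [3,2]"
  by (auto simp: dn_path_def dn_arrow_def dn_edge_def)

lemma fin_pbasis: "finite (supp (pbasis p))"
  by (rule finite_subset[of _ "{p}"]) (auto simp: supp_def pbasis_def)

lemma fin_padd: "finite (supp f) \<Longrightarrow> finite (supp g) \<Longrightarrow> finite (supp (padd f g))"
  using supp_padd[of f g] by (meson finite_Un finite_subset)

lemma XY_eq: "pmult (pmult (pbasis [2,0]) (pbasis [0,2])) (pmult (pbasis [2,1]) (pbasis [1,2])) = pbasis [2,0,2,1,2]"
  by (simp add: pmult_pbasis)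

lemma X_eq: "pmult (pbasis [2,0]) (pbasis [0,2]) = pbasis [2,0,2]"
  by (simp add: pmult_pbasis)
lemma Y_eq: "pmult (pbasis [2,1]) (pbasis [1,2]) = pbasis [2,1,2]"
  by (simp add: pmult_pbasis)

lemma vertex_rel_KQ: "vertex_rel n v \<in> KQ n"
proof -
  have "{[v,w,v] | w. dn_arrow n v w} \<subseteq> (\<lambda>w. [v,w,v]) ` {..<n}"
    by (auto simp: dn_arrow_def)
  hence "finite {[v,w,v] | w. dn_arrow n v w}" by (rule finite_subset) simp
  moreover have "\<forall>p\<in>{[v,w,v] | w. dn_arrow n v w}. dn_path n p"
  proof
    fix p assume "p \<in> {[v,w,v] | w. dn_arrow n v w}"
    then obtain w where "dn_arrow n v w" "p = [v,w,v]" by blast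
    moreover hence "dn_arrow n w v" by (auto simp: dn_arrow_def)
    ultimately show "dn_path n p" by (auto simp: dn_path_def dn_arrow_def)
  qed
  ultimately show ?thesis unfolding vertex_rel_ind by (rule KQ_ind)
qed

lemma gens_KQ: "n \<ge> 4 \<Longrightarrow> Istar_gens n \<subseteq> KQ n"
  unfolding Istar_gens_def
  by (auto intro!: KQ_padd KQ_pmult KQ_ppow KQ_pbasis vertex_rel_KQ simp: dn_path_def dn_arrow_def dn_edge_def)

lemma Istar_KQ: "n \<ge> 4 \<Longrightarrow> Istar n \<subseteq> KQ n"
  unfolding Istar_def by (rule gen_ideal_KQ[OF gens_KQ])

lemma phi_two:
  assumes "CHAR('a::field) = 2" "run n st a = run n st b"
  shows "phi n (padd (pbasis a) (pbasis b) :: nat list \<Rightarrow> 'a) st st' = 0"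
  using assms by (simp add: phi_padd fin_pbasis phi_pbasis char2)

lemma gens_J0:
  assumes n4: "n \<ge> 4" and ev: "even n" and ch: "CHAR('a::field) = 2"
  shows "(Istar_gens n :: (nat list \<Rightarrow> 'a) set) \<subseteq> J0 n"
proof
  fix g :: "nat list \<Rightarrow> 'a" assume g: "g \<in> Istar_gens n"
  have gK: "g \<in> KQ n" using g gens_KQ[OF n4] by blast
  have NN4: "NN n mod 4 = 0" using ev n4 by (auto simp: NN_def elim!: evenE)
  have NNe: "even (NN n)" using NN4 by presburger
  have "\<forall>st st'. phi n g st st' = 0"
  proof (intro allI)
    fix st st'
    consider (v) v where "v < n" "v \<noteq> 2" "g = vertex_rel n v"
      | (t) "g = padd (vertex_rel n 2)
        (ppow n (pmult (pmult (pbasis [2,0]) (pbasis [0,2])) (pmult (pbasis [2,1]) (pbasis [1,2])))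
           (n div 2 - 1))"
      | (p) "g = ppow n (padd (pmult (pbasis [2,0]) (pbasis [0,2])) (pmult (pbasis [2,1]) (pbasis [1,2]))) (n - 2)"
      using g unfolding Istar_gens_def by blast
    thus "phi n g st st' = 0"
    proof cases
      case v
      consider "v = 0" | "v = 1" | "v = n - 1" | "3 \<le> v" "v + 1 < n" using v by linarith
      thus ?thesis
      proof cases
        case 1 thus ?thesis using v n4 by (simp add: VR0 phi_pbasis R0 del: run.simps)
      next
        case 2
        obtain l h where st: "st = (l, h)" by (cases st)
        have e: "vertex_rel n 1 = (pbasis [1,2,1] :: nat list \<Rightarrow> 'a)" by (rule VR1[OF n4])
        show ?thesis using 2 v e R1[of n l h] by (simp add: phi_pbasis st del: run.simps)
      next
        case 3
        have e: "vertex_rel n (n-1) = (pbasis [n-1,n-2,n-1] :: nat list \<Rightarrow> 'a)" by (rule VRl[OF n4])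
        show ?thesis using 3 v e Rleaf[OF n4, of st] by (simp add: phi_pbasis del: run.simps)
      next
        case 4
        have e: "vertex_rel n v = (padd (pbasis [v,v-1,v]) (pbasis [v,v+1,v]) :: nat list \<Rightarrow> 'a)"
          by (rule VRk[OF n4 4])
        show ?thesis unfolding v(3) e by (rule phi_two[OF ch Rk_eq[OF 4(1)]])
      qed
    next
      case t
      have fin1: "finite (supp (pbasis [2,0,2,1,2] :: nat list \<Rightarrow> 'a))" by (rule fin_pbasis)
      have finp: "finite (supp (ppow n (pbasis [2,0,2,1,2] :: nat list \<Rightarrow> 'a) k))" for k
        by (rule KQ_finite, rule KQ_ppow, rule KQ_pbasis) (use n4 in \<open>auto simp: dn_path_def dn_arrow_def dn_edge_def\<close>)
      have z1: "phi n (ppow n (pbasis [2,0,2,1,2] :: nat list \<Rightarrow> 'a) (n div 2 - 1)) st st' = 0"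
      proof (rule ccontr)
        assume nz: "phi n (ppow n (pbasis [2,0,2,1,2] :: nat list \<Rightarrow> 'a) (n div 2 - 1)) st st' \<noteq> 0"
        have sh: "fst s' = fst s + 4 \<and> odd (fst s') \<and> fst s' \<le> NN n"
          if "phi n (pbasis [2,0,2,1,2] :: nat list \<Rightarrow> 'a) s s' \<noteq> 0" for s s'
        proof -
          have "run n s [2,0,2,1,2] = Some s'" using that
            by (simp add: phi_pbasis del: run.simps split: if_splits)
          thus ?thesis by (rule Rxy)
        qed
        have "fst st' = fst st + (n div 2 - 1) * 4 \<and> (n div 2 - 1 \<ge> 1 \<longrightarrow> odd (fst st') \<and> fst st' \<le> NN n)"
          by (rule ppow_shift[OF fin1 sh nz])
        moreover have "(n div 2 - 1) * 4 = NN n" "n div 2 - 1 \<ge> 1" using ev n4 by (auto simp: NN_def elim!: evenE)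
        ultimately show False using NNe by auto
      qed
      have finX: "finite (supp (padd (pbasis [2,0,2]) (pbasis [2,1,2]) :: nat list \<Rightarrow> 'a))"
        using supp_padd[of "pbasis [2,0,2] :: nat list \<Rightarrow> 'a" "pbasis [2,1,2]"] fin_pbasis
        by (meson finite_Un finite_subset)
      have "phi n (vertex_rel n 2 :: nat list \<Rightarrow> 'a) st st' = 0"
      proof -
        have e: "vertex_rel n 2 = (padd (padd (pbasis [2,0,2]) (pbasis [2,1,2])) (pbasis [2,3,2]) :: nat list \<Rightarrow> 'a)"
          by (rule VR2[OF n4])
        show ?thesis unfolding e using R2[OF NN4, of st]
          by (auto simp: phi_padd fin_pbasis fin_padd phi_pbasis char2[OF ch] simp del: run.simps)
      qed
      have fv: "finite (supp (vertex_rel n 2 :: nat list \<Rightarrow> 'a))" by (rule KQ_finite[OF vertex_rel_KQ])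
      show ?thesis unfolding t XY_eq phi_padd[OF fv finp] using z1 \<open>phi n (vertex_rel n 2) st st' = 0\<close> by simp
    next
      case p
      let ?f = "padd (pbasis [2,0,2]) (pbasis [2,1,2]) :: nat list \<Rightarrow> 'a"
      have fin1: "finite (supp ?f)"
        using supp_padd[of "pbasis [2,0,2] :: nat list \<Rightarrow> 'a" "pbasis [2,1,2]"] fin_pbasis
        by (meson finite_Un finite_subset)
      have z1: "phi n (ppow n ?f (n - 2)) st st' = 0"
      proof (rule ccontr)
        assume nz: "phi n (ppow n ?f (n - 2)) st st' \<noteq> 0"
        have sh: "fst s' = fst s + 2 \<and> odd (fst s') \<and> fst s' \<le> NN n"
          if "phi n ?f s s' \<noteq> 0" for s s'
        proof -
          have "run n s [2,0,2] = Some s' \<or> run n s [2,1,2] = Some s'"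
            using that by (auto simp: phi_padd fin_pbasis phi_pbasis simp del: run.simps split: if_splits)
          thus ?thesis using Ra[of 0 n s s'] Ra[of 1 n s s'] by (auto simp del: run.simps)
        qed
        have "fst st' = fst st + (n - 2) * 2 \<and> (n - 2 \<ge> 1 \<longrightarrow> odd (fst st') \<and> fst st' \<le> NN n)"
          by (rule ppow_shift[OF fin1 sh nz])
        moreover have "(n - 2) * 2 = NN n" "n - 2 \<ge> 1" using n4 by (auto simp: NN_def)
        ultimately show False using NNe by auto
      qed
      thus ?thesis unfolding p X_eq Y_eq .
    qed
  qed
  thus "g \<in> J0 n" using gK by (simp add: J0_def)
qed

lemma Istar_J0:
  assumes "n \<ge> 4" "even n" "CHAR('a::field) = 2"
  shows "(Istar n :: (nat list \<Rightarrow> 'a) set) \<subseteq> J0 n"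
  unfolding Istar_def by (rule gen_ideal_sub[OF J0_ideal gens_J0[OF assms]])



lemma succ_upt: "(\<And>i. P i (Suc i)) \<Longrightarrow> successively P [a..<b]"
proof (induction b)
  case 0 thus ?case by simp
next
  case (Suc b)
  show ?case
  proof (cases "a \<le> b")
    case False thus ?thesis by simp
  next
    case True
    have "successively P ([a..<b] @ [b])"
    proof (cases "a = b")
      case True thus ?thesis by simp
    next
      case False
      hence "last [a..<b] = b - 1" "b > 0" using \<open>a \<le> b\<close> by (auto simp: last_upt)
      moreover have "P (b - 1) (Suc (b - 1))" by (rule Suc.prems)
      ultimately show ?thesis using Suc False by (auto simp: successively_append_iff)
    qed
    thus ?thesis using True by simp
  qed
qed

lemma Wv_arrow: "n \<ge> 4 \<Longrightarrow> dn_arrow n (Wv i) (Wv (Suc i))"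
proof -
  assume n: "n \<ge> 4"
  have "i mod 4 = 0 \<or> i mod 4 = 1 \<or> i mod 4 = 2 \<or> i mod 4 = 3" by presburger
  moreover have "Suc i mod 4 = (if i mod 4 = 3 then 0 else Suc (i mod 4))" by presburger
  ultimately show ?thesis using n by (auto simp: Wv_def dn_arrow_def dn_edge_def)
qed

lemma Wv_lt: "n \<ge> 4 \<Longrightarrow> Wv v < n"
  using Wv_simps(5)[of v] by linarith

lemma dn_path_Wv: "n \<ge> 4 \<Longrightarrow> a < b \<Longrightarrow> dn_path n (map Wv [a..<b])"
  unfolding dn_path_def successively_map using Wv_lt
  by (auto intro!: succ_upt Wv_arrow simp del: upt_Suc)

definition blocks :: "nat list \<Rightarrow> nat list" where
  "blocks cs = concat (map (\<lambda>c. [c, 2]) cs)"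

definition alt :: "nat \<Rightarrow> nat \<Rightarrow> nat list" where
  "alt c k = map (\<lambda>i. if even i then c else 1 - c) [0..<k]"

lemma blocks_simps [simp]: "blocks [] = []" "blocks (c # cs) = c # 2 # blocks cs"
  "blocks (cs @ ds) = blocks cs @ blocks ds"
  by (simp_all add: blocks_def)

lemma alt_Suc: "c \<le> 1 \<Longrightarrow> alt c (Suc k) = c # alt (1 - c) k"
  unfolding alt_def by (auto simp: map_upt_Suc simp del: upt_Suc intro!: map_cong)

lemma alt_snoc: "alt c (Suc k) = alt c k @ [if even k then c else 1 - c]"
  unfolding alt_def by simp

lemma Wv_blocks: "map Wv [0..<2*k+2] = 0 # 2 # blocks (alt 1 k)"
proof (induction k)
  case 0 thus ?case by (simp add: Wv_def alt_def upt_rec)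
next
  case (Suc k)
  have e: "[0..<2 * Suc k + 2] = [0..<2*k+2] @ [2*k+2, 2*k+3]"
    by (simp add: upt_rec[of "2*k+2"] upt_rec[of "2*k+3"] upt_add_eq_append[symmetric])
  have w1: "Wv (2*k+2) = (if even k then 1 else 0)" unfolding Wv_def by presburger
  have w2: "Wv (2*k+3) = 2" unfolding Wv_def by presburger
  show ?case unfolding e using Suc w1 w2 by (simp add: alt_snoc)
qed

definition Wd :: "nat \<Rightarrow> nat list set" where
  "Wd k = {2 # blocks cs | cs. length cs = k \<and> set cs \<subseteq> {0,1}}"

lemma last_blocks: "last (c # 2 # blocks cs) = 2"
  by (induction cs arbitrary: c) auto

lemma Wd_1: "Wd 1 = {[2,0,2],[2,1,2]}"
proof (rule set_eqI, rule iffI)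
  fix w assume "w \<in> Wd 1"
  then obtain cs where cs: "w = 2 # blocks cs" "length cs = 1" "set cs \<subseteq> {0,1}" unfolding Wd_def by blast
  then obtain c where c: "cs = [c]" by (cases cs) auto
  thus "w \<in> {[2,0,2],[2,1,2]}" using cs by auto
next
  fix w :: "nat list" assume "w \<in> {[2,0,2],[2,1,2]}"
  then obtain c where "c = 0 \<or> c = 1" "w = 2 # blocks [c]" by auto
  thus "w \<in> Wd 1" unfolding Wd_def by (intro CollectI exI[of _ "[c]"]) auto
qed

lemma Wd_Suc: "Wd (Suc k) = (\<lambda>(p,q). p @ tl q) ` {(p,q). p \<in> Wd k \<and> q \<in> {[2,0,2],[2,1,2]} \<and> last p = hd q}"
proof (rule set_eqI, rule iffI)
  fix w assume "w \<in> Wd (Suc k)"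
  then obtain cs where cs: "w = 2 # blocks cs" "length cs = Suc k" "set cs \<subseteq> {0,1}" unfolding Wd_def by blast
  then obtain ds c where ds: "cs = ds @ [c]" by (metis length_Suc_conv_rev)
  have c: "c = 0 \<or> c = 1" using cs ds by auto
  have lst: "last (2 # blocks ds) = 2"
  proof (cases ds)
    case (Cons a l) thus ?thesis using last_blocks[of a l] by simp
  qed simp
  have "w = (2 # blocks ds) @ tl [2, c, 2]" using cs ds by simp
  moreover have "2 # blocks ds \<in> Wd k" using cs ds unfolding Wd_def by auto
  ultimately show "w \<in> (\<lambda>(p,q). p @ tl q) ` {(p,q). p \<in> Wd k \<and> q \<in> {[2,0,2],[2,1,2]} \<and> last p = hd q}"
    using c lst by (auto intro!: image_eqI[of _ _ "(2 # blocks ds, [2,c,2])"])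
next
  fix w assume "w \<in> (\<lambda>(p,q). p @ tl q) ` {(p,q). p \<in> Wd k \<and> q \<in> {[2,0,2],[2,1,2]} \<and> last p = hd q}"
  then obtain p q where pq: "p \<in> Wd k" "q \<in> {[2,0,2],[2,1,2]}" "w = p @ tl q" by auto
  then obtain cs where cs: "p = 2 # blocks cs" "length cs = k" "set cs \<subseteq> {0,1}" unfolding Wd_def by blast
  obtain c where c: "c = 0 \<or> c = 1" "q = [2,c,2]" using pq by auto
  have "w = 2 # blocks (cs @ [c])" using cs c pq by simp
  thus "w \<in> Wd (Suc k)" using cs c unfolding Wd_def by (auto intro!: exI[of _ "cs @ [c]"])
qed

lemma ppow_Wd:
  assumes n: "n \<ge> 4" and k: "k \<ge> 1"
  shows "ppow n (ind {[2,0,2],[2,1,2]} :: nat list \<Rightarrow> 'a::field) k = ind (Wd k)"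
  using k
proof (induction k)
  case 0 thus ?case by simp
next
  case (Suc k)
  show ?case
  proof (cases "k = 0")
    case True
    have h1: "ppow n (ind {[2,0,2],[2,1,2]} :: nat list \<Rightarrow> 'a) 1 = ind {[2,0,2],[2,1,2]}"
      using n by (simp add: pmult_pone_left)
    have e1: "Suc k = 1" using True by simp
    show ?thesis unfolding e1 Wd_1 by (rule h1)
  next
    case False
    hence IH: "ppow n (ind {[2,0,2],[2,1,2]} :: nat list \<Rightarrow> 'a) k = ind (Wd k)" using Suc.IH by simp
    have ne: "\<forall>p\<in>Wd k. p \<noteq> []" unfolding Wd_def by auto
    have inj: "inj_on (\<lambda>(p,q). p @ tl q) {(p,q). p \<in> Wd k \<and> q \<in> {[2,0,2],[2,1,2]} \<and> last p = hd q}"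
    proof (rule inj_onI, clarify)
      fix p q p' q' assume a: "p @ tl q = p' @ tl q'" "q \<in> {[2,0,2],[2,1,2]}" "q' \<in> {[2,0,2],[2,1,2]}"
      have "length (tl q) = length (tl q')" using a(2,3) by auto
      hence "p = p' \<and> tl q = tl q'" using a(1) append_eq_append_conv by blast
      moreover have "q = 2 # tl q" "q' = 2 # tl q'" using a(2,3) by auto
      ultimately show "p = p' \<and> q = q'" by metis
    qed
    show ?thesis using IH ne inj by (simp add: pmult_ind Wd_Suc del: ppow.simps) (simp add: pmult_ind Wd_Suc)
  qed
qed


lemma pmult_a0:
  assumes "\<forall>w\<in>S. w \<noteq> [] \<and> hd w = 2"
  shows "pmult (pbasis [0,2]) (ind S) = (ind ((Cons 0) ` S) :: nat list \<Rightarrow> 'a::field)"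
proof -
  have e: "(\<lambda>(p,q). p @ tl q) ` {(p,q). p \<in> {[0,2]} \<and> q \<in> S \<and> last p = hd q} = (Cons 0) ` S"
  proof (rule set_eqI, rule iffI)
    fix x assume "x \<in> (\<lambda>(p,q). p @ tl q) ` {(p,q). p \<in> {[0,2]} \<and> q \<in> S \<and> last p = hd q}"
    then obtain q where "q \<in> S" "x = [0,2] @ tl q" by auto
    moreover hence "q = 2 # tl q" using assms by (metis list.collapse)
    ultimately show "x \<in> (Cons 0) ` S" by (metis append_Cons append_Nil image_eqI)
  next
    fix x assume "x \<in> (Cons 0) ` S"
    then obtain q where q: "q \<in> S" "x = 0 # q" by auto
    moreover hence "q = 2 # tl q" using assms by (metis list.collapse)
    ultimately show "x \<in> (\<lambda>(p,q). p @ tl q) ` {(p,q). p \<in> {[0,2]} \<and> q \<in> S \<and> last p = hd q}"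
      using assms by (auto intro!: image_eqI[of _ _ "([0,2], q)"])
  qed
  have inj: "inj_on (\<lambda>(p,q). p @ tl q) {(p,q). p \<in> {[0,2]} \<and> q \<in> S \<and> last p = hd q}"
  proof (rule inj_onI)
    fix x y assume xy: "x \<in> {(p,q). p \<in> {[0,2]} \<and> q \<in> S \<and> last p = hd q}"
      "y \<in> {(p,q). p \<in> {[0,2]} \<and> q \<in> S \<and> last p = hd q}"
      "(\<lambda>(p,q). p @ tl q) x = (\<lambda>(p,q). p @ tl q) y"
    obtain q q' where a: "x = ([0,2], q)" "y = ([0,2], q')" "q \<in> S" "q' \<in> S" using xy(1,2) by auto
    hence "tl q = tl q'" using xy(3) by simp
    moreover have "q = 2 # tl q" "q' = 2 # tl q'" using a assms by (metis list.collapse)+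
    ultimately show "x = y" using a by metis
  qed
  have "pmult (ind {[0,2]}) (ind S) =
     (ind ((\<lambda>(p,q). p @ tl q) ` {(p,q). p \<in> {[0,2]} \<and> q \<in> S \<and> last p = hd q}) :: nat list \<Rightarrow> 'a)"
    by (rule pmult_ind) (use assms inj in auto)
  thus ?thesis unfolding pbasis_ind e .
qed

lemma rep_lemma:
  "c0 \<le> 1 \<Longrightarrow> set cs \<subseteq> {0,1} \<Longrightarrow>
    (\<exists>u v r. c0 # 2 # blocks cs = u @ [v,2,v] @ r \<and> v \<le> 1) \<or> cs = alt (1 - c0) (length cs)"
proof (induction cs arbitrary: c0)
  case Nil thus ?case by (simp add: alt_def)
next
  case (Cons c cs)
  have c: "c \<le> 1" "set cs \<subseteq> {0,1}" using Cons.prems by auto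
  show ?case
  proof (cases "c = c0")
    case True
    hence "c0 # 2 # blocks (c # cs) = [] @ [c0,2,c0] @ (2 # blocks cs)" by simp
    thus ?thesis using Cons.prems by blast
  next
    case False
    hence c1: "c = 1 - c0" using c Cons.prems by auto
    from Cons.IH[OF c(1) c(2)] show ?thesis
    proof
      assume "\<exists>u v r. c # 2 # blocks cs = u @ [v,2,v] @ r \<and> v \<le> 1"
      then obtain u v r where "c # 2 # blocks cs = u @ [v,2,v] @ r" "v \<le> 1" by blast
      hence "c0 # 2 # blocks (c # cs) = (c0 # 2 # u) @ [v,2,v] @ r \<and> v \<le> 1" by simp
      thus ?thesis by blast
    next
      assume "cs = alt (1 - c) (length cs)"
      hence h: "c # cs = alt c (length (c # cs))" using c by (simp add: alt_Suc)
      have "c # cs = alt (1 - c0) (length (c # cs))" using h c1 by (simp only:)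
      thus ?thesis by blast
    qed
  qed
qed

lemma dn_path_words:
  "n \<ge> 4 \<Longrightarrow> c0 \<le> 1 \<Longrightarrow> set cs \<subseteq> {0,1} \<Longrightarrow> dn_path n (c0 # 2 # blocks cs)"
proof (induction cs arbitrary: c0)
  case Nil thus ?case by (auto simp: dn_path_def dn_arrow_def dn_edge_def)
next
  case (Cons c cs)
  have "dn_path n (c # 2 # blocks cs)" using Cons by auto
  moreover have "dn_arrow n c0 2" "dn_arrow n 2 c0" "c0 < n" "dn_arrow n 2 c" using Cons.prems by (auto simp: dn_arrow_def dn_edge_def)
  ultimately show ?case by (auto simp: dn_path_def)
qed

lemma dn_path_prefix: "dn_path n (xs @ ys) \<Longrightarrow> xs \<noteq> [] \<Longrightarrow> dn_path n xs"
  by (auto simp: dn_path_def successively_append_iff)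
lemma dn_path_suffix: "dn_path n (xs @ ys) \<Longrightarrow> ys \<noteq> [] \<Longrightarrow> dn_path n ys"
  by (auto simp: dn_path_def successively_append_iff)

lemma Istar_gen_vr: "n \<ge> 4 \<Longrightarrow> v < n \<Longrightarrow> v \<noteq> 2 \<Longrightarrow> vertex_rel n v \<in> Istar n"
  unfolding Istar_def by (rule gen_ideal_gen) (auto simp: Istar_gens_def)

lemma pbasis_rep_Istar:
  assumes n: "n \<ge> 4" and v: "v \<le> 1" and d: "dn_path n (u @ [v,2,v] @ r)"
  shows "pbasis (u @ [v,2,v] @ r) \<in> (Istar n :: (nat list \<Rightarrow> 'a::field) set)"
proof -
  have d1: "dn_path n (u @ [v])" using dn_path_prefix[of n "u @ [v]" "[2,v] @ r"] d by simp
  have d2: "dn_path n (v # r)" using dn_path_suffix[of n "u @ [v,2]" "v # r"] d by simp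
  have vr: "vertex_rel n v = (pbasis [v,2,v] :: nat list \<Rightarrow> 'a)"
  proof -
    have "v = 0 \<or> v = 1" using v by auto
    thus ?thesis
    proof
      assume "v = 0" thus ?thesis using VR0[OF n] by simp
    next
      assume "v = 1" thus ?thesis using VR1[OF n] by simp
    qed
  qed
  have "pbasis (u @ [v,2,v] @ r) = pmult (pmult (pbasis (u @ [v])) (pbasis [v,2,v])) (pbasis (v # r))"
    by (simp add: pmult_pbasis)
  also have "\<dots> \<in> (Istar n :: (nat list \<Rightarrow> 'a) set)"
    unfolding Istar_def
    apply (rule gen_ideal_right[OF KQ_pbasis[OF d2]])
    apply (rule gen_ideal_left[OF KQ_pbasis[OF d1]])
  proof -
    have "v < n" "v \<noteq> 2" using v n by auto
    hence "(vertex_rel n v :: nat list \<Rightarrow> 'a) \<in> Istar n" using Istar_gen_vr[OF n] by blast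
    thus "(pbasis [v,2,v] :: nat list \<Rightarrow> 'a) \<in> gen_ideal n (Istar_gens n)" using vr unfolding Istar_def by simp
  qed
  finally show ?thesis .
qed

lemma ind_Istar:
  assumes "finite B" "\<forall>b\<in>B. pbasis b \<in> (Istar n :: (nat list \<Rightarrow> 'a::field) set)"
  shows "(ind B :: nat list \<Rightarrow> 'a) \<in> Istar n"
  using assms
proof (induction B rule: finite_induct)
  case empty
  have "(ind {} :: nat list \<Rightarrow> 'a) = pzero" by (rule ext) (simp add: ind_def pzero_def)
  thus ?case unfolding Istar_def by (simp add: gen_ideal_pzero)
next
  case (insert b B)
  have "(ind (insert b B) :: nat list \<Rightarrow> 'a) = padd (pbasis b) (ind B)"
    using insert.hyps by (auto simp: ind_def padd_def pbasis_def)
  thus ?case using insert unfolding Istar_def by (simp add: gen_ideal_padd)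
qed

lemma finite_Wd: "finite (Wd k)"
proof -
  have "Wd k = (\<lambda>cs. 2 # blocks cs) ` {cs. set cs \<subseteq> {0,1} \<and> length cs = k}"
    unfolding Wd_def by auto
  thus ?thesis using finite_lists_length_eq[of "{0::nat,1}" k] by simp
qed

lemma socle_cat_Istar:
  assumes n: "n \<ge> 4" and ev: "even n"
  shows "(pbasis (map Wv [0..<NN n + 2]) :: nat list \<Rightarrow> 'a::field) \<in> Istar n"
proof -
  let ?X = "pmult (pbasis [2,0]) (pbasis [0,2]) :: nat list \<Rightarrow> 'a"
  let ?Y = "pmult (pbasis [2,1]) (pbasis [1,2]) :: nat list \<Rightarrow> 'a"
  have G: "ppow n (padd ?X ?Y) (n - 2) \<in> Istar n"
    unfolding Istar_def by (rule gen_ideal_gen) (simp add: Istar_gens_def)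
  have XY: "padd ?X ?Y = ind {[2,0,2],[2,1,2]}"
    unfolding X_eq Y_eq by (rule ext) (simp add: padd_def pbasis_def ind_def)
  have G2: "(ind (Wd (n - 2)) :: nat list \<Rightarrow> 'a) \<in> Istar n"
  proof -
    have pw: "ppow n (ind {[2,0,2],[2,1,2]} :: nat list \<Rightarrow> 'a) (n-2) = ind (Wd (n-2))"
      by (rule ppow_Wd[OF n]) (use n in simp)
    show ?thesis using G unfolding XY pw .
  qed
  have d02: "dn_path n [0,2]" using n by (auto simp: dn_path_def dn_arrow_def dn_edge_def)
  have hdW: "\<forall>w\<in>Wd (n-2). w \<noteq> [] \<and> hd w = 2" unfolding Wd_def by auto
  let ?S = "(Cons 0) ` Wd (n - 2)"
  have E: "(ind ?S :: nat list \<Rightarrow> 'a) \<in> Istar n"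
  proof -
    have "pmult (pbasis [0,2]) (ind (Wd (n - 2)) :: nat list \<Rightarrow> 'a) \<in> Istar n"
      using G2 unfolding Istar_def by (rule gen_ideal_left[OF KQ_pbasis[OF d02]])
    thus ?thesis unfolding pmult_a0[OF hdW] .
  qed
  let ?t = "map Wv [0..<NN n + 2]"
  have t: "?t = 0 # 2 # blocks (alt 1 (n - 2))"
  proof -
    have "NN n + 2 = 2 * (n - 2) + 2" using n by (simp add: NN_def)
    thus ?thesis using Wv_blocks[of "n - 2"] by simp
  qed
  have alt01: "set (alt 1 k) \<subseteq> {0,1}" for k unfolding alt_def by auto
  have "2 # blocks (alt 1 (n - 2)) \<in> Wd (n - 2)" unfolding Wd_def
    by (intro CollectI exI[of _ "alt 1 (n - 2)"]) (use alt01 in \<open>simp add: alt_def\<close>)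
  hence tS: "?t \<in> ?S" unfolding t by blast
  let ?B = "?S - {?t}"
  have finB: "finite ?B" using finite_Wd by simp
  have Bin: "\<forall>b\<in>?B. (pbasis b :: nat list \<Rightarrow> 'a) \<in> Istar n"
  proof
    fix b assume b: "b \<in> ?B"
    then obtain cs where cs: "b = 0 # 2 # blocks cs" "length cs = n - 2" "set cs \<subseteq> {0,1}"
      unfolding Wd_def by auto
    have "cs \<noteq> alt 1 (n - 2)" using b cs t by auto
    hence "\<exists>u v r. 0 # 2 # blocks cs = u @ [v,2,v] @ r \<and> v \<le> 1"
      using rep_lemma[of 0 cs] cs by auto
    then obtain u v r where uvr: "b = u @ [v,2,v] @ r" "v \<le> 1" using cs by auto
    have "dn_path n b" using dn_path_words[OF n _ cs(3), of 0] cs by simp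
    thus "(pbasis b :: nat list \<Rightarrow> 'a) \<in> Istar n" unfolding uvr(1) by (rule pbasis_rep_Istar[OF n uvr(2)])
  qed
  have B: "(ind ?B :: nat list \<Rightarrow> 'a) \<in> Istar n" by (rule ind_Istar[OF finB Bin])
  have "(pbasis ?t :: nat list \<Rightarrow> 'a) = padd (ind ?S) (psmult (-1) (ind ?B))"
    using tS by (auto simp: padd_def psmult_def ind_def pbasis_def)
  also have "\<dots> \<in> Istar n" using E B unfolding Istar_def by (simp add: gen_ideal_padd gen_ideal_psmult)
  finally show ?thesis .
qed



lemma Wv_mod: "l mod 4 = 0 \<Longrightarrow> Wv l = 0" "l mod 4 = 1 \<Longrightarrow> Wv l = 2"
  "l mod 4 = 2 \<Longrightarrow> Wv l = 1" "l mod 4 = 3 \<Longrightarrow> Wv l = 2"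
  by (auto simp: Wv_def)

lemma NN_mod: "n \<ge> 4 \<Longrightarrow> even n \<Longrightarrow> NN n mod 4 = 0"
  by (auto simp: NN_def elim!: evenE)

lemma upt_split: "i \<le> j \<Longrightarrow> j \<le> k \<Longrightarrow> [i..<k] = [i..<j] @ [j..<k]"
  using upt_add_eq_append[of i j "k - j"] by simp

lemma ppow_xy:
  assumes n: "n \<ge> 4" and k: "k \<ge> 1"
  shows "ppow n (pbasis [2,0,2,1,2] :: nat list \<Rightarrow> 'a::field) k = pbasis (map Wv [3..<4*k+4])"
  using k
proof (induction k)
  case 0 thus ?case by simp
next
  case (Suc k)
  show ?case
  proof (cases "k = 0")
    case True
    have "[3..<8] = [3,4,5,6,7]" by (simp add: upt_rec)
    hence e: "map Wv [3..<4 * Suc 0 + 4] = [2,0,2,1,2]" by (simp add: Wv_def)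
    have "pmult (pone n) (pbasis [2,0,2,1,2]) = (pbasis [2,0,2,1,2] :: nat list \<Rightarrow> 'a)"
      unfolding pbasis_ind using n by (subst pmult_pone_left) auto
    thus ?thesis using True e by simp
  next
    case False
    hence IH: "ppow n (pbasis [2,0,2,1,2] :: nat list \<Rightarrow> 'a) k = pbasis (map Wv [3..<4*k+4])" using Suc by simp
    have sp: "[3..<4 * Suc k + 4] = [3..<4*k+4] @ [4*k+4, 4*k+5, 4*k+6, 4*k+7]"
    proof -
      have "[3..<4*k+4 + 4] = [3..<4*k+4] @ [4*k+4..<4*k+4+4]" by (rule upt_add_eq_append) simp
      moreover have "[4*k+4..<4*k+4+4] = [4*k+4, 4*k+5, 4*k+6, 4*k+7]" by (simp add: upt_rec)
      ultimately show ?thesis by simp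
    qed
    have w: "Wv (4*k+4) = 0" "Wv (4*k+5) = 2" "Wv (4*k+6) = 1" "Wv (4*k+7) = 2" "Wv (4*k+3) = 2"
      by (simp_all add: Wv_def)
    have lst: "last (map Wv [3..<4*k+4]) = 2" using w(5) by (simp add: last_map add.commute del: upt_Suc)
    have ne: "map Wv [3..<4*k+4] \<noteq> []" by simp
    have "ppow n (pbasis [2,0,2,1,2] :: nat list \<Rightarrow> 'a) (Suc k) = pmult (pbasis (map Wv [3..<4*k+4])) (pbasis [2,0,2,1,2])"
      using IH by simp
    also have "\<dots> = pbasis (map Wv [3..<4*k+4] @ [0,2,1,2])"
      using lst ne by (simp add: pmult_pbasis del: upt_Suc)
    also have "map Wv [3..<4*k+4] @ [0,2,1,2] = map Wv [3..<4 * Suc k + 4]"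
      unfolding sp using w by simp
    finally show ?thesis .
  qed
qed

definition psi_ok :: "nat \<Rightarrow> ((nat list \<Rightarrow> 'a::field) \<Rightarrow> 'a) \<Rightarrow> bool" where
  "psi_ok n \<psi> \<longleftrightarrow> (\<forall>f\<in>KQ n. \<forall>g\<in>KQ n. \<psi> (padd f g) = \<psi> f + \<psi> g) \<and>
     (\<forall>c. \<forall>f\<in>KQ n. \<psi> (psmult c f) = c * \<psi> f) \<and> (\<forall>f\<in>Istar n. \<psi> f = 0) \<and>
     (\<forall>a\<in>KQ n. \<forall>b\<in>KQ n. \<psi> (pmult a b) = \<psi> (pmult b a))"

lemma psi_rot:
  assumes "psi_ok n \<psi>" "dn_path n p" "dn_path n q" "last p = hd q" "last q = hd p"
  shows "\<psi> (pbasis (p @ tl q)) = \<psi> (pbasis (q @ tl p))"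
proof -
  have ne: "p \<noteq> []" "q \<noteq> []" using assms by (auto simp: dn_path_def)
  have "\<psi> (pmult (pbasis p) (pbasis q)) = \<psi> (pmult (pbasis q) (pbasis p))"
    using assms KQ_pbasis unfolding psi_ok_def by blast
  thus ?thesis using ne assms by (simp add: pmult_pbasis)
qed

lemma psi_Istar_padd:
  assumes "psi_ok n \<psi>" "a \<in> KQ n" "b \<in> KQ n" "padd a b \<in> Istar n" "\<psi> a = 0"
  shows "\<psi> b = 0"
proof -
  have "\<psi> (padd a b) = 0" using assms unfolding psi_ok_def by blast
  moreover have "\<psi> (padd a b) = \<psi> a + \<psi> b" using assms unfolding psi_ok_def by blast
  ultimately show ?thesis using assms(5) by simp
qed

lemma psi_Istar: "psi_ok n \<psi> \<Longrightarrow> f \<in> Istar n \<Longrightarrow> \<psi> f = 0"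
  unfolding psi_ok_def by blast

lemma dn3: "n \<ge> 4 \<Longrightarrow> dn_arrow n a b \<Longrightarrow> dn_path n [a,b]"
  by (auto simp: dn_path_def dn_arrow_def)

lemma psi_chain:
  fixes \<psi> :: "(nat list \<Rightarrow> 'a::field) \<Rightarrow> 'a"
  assumes ok: "psi_ok n \<psi>" and n: "n \<ge> 4"
  shows "j \<le> n - 4 \<Longrightarrow> \<psi> (pbasis [n-1-j, n-2-j, n-1-j]) = 0"
proof (induction j)
  case 0
  have "vertex_rel n (n-1) \<in> Istar n" by (rule Istar_gen_vr[OF n]) (use n in auto)
  hence "\<psi> (vertex_rel n (n-1)) = 0" using psi_Istar[OF ok] by blast
  moreover have "(vertex_rel n (n-1) :: nat list \<Rightarrow> 'a) = pbasis [n-1,n-2,n-1]" by (rule VRl[OF n])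
  ultimately show ?case by simp
next
  case (Suc j)
  define k where "k = n - 2 - j"
  have k: "3 \<le> k" "k + 1 < n" using Suc.prems n by (auto simp: k_def)
  have e1: "n - 1 - Suc j = k" "n - 2 - Suc j = k - 1" using k Suc.prems by (auto simp: k_def)
  have e2: "n - 1 - j = k + 1" "n - 2 - j = k" using k Suc.prems by (auto simp: k_def)
  have IH: "\<psi> (pbasis [k+1, k, k+1]) = 0" using Suc.IH Suc.prems e2 by simp
  have ar: "dn_arrow n k (k+1)" "dn_arrow n (k+1) k" "dn_arrow n k (k-1)" "dn_arrow n (k-1) k"
    using k by (auto simp: dn_arrow_def dn_edge_def)
  have "\<psi> (pbasis ([k, k+1] @ tl [k+1, k])) = \<psi> (pbasis ([k+1, k] @ tl [k, k+1]))"
    by (rule psi_rot[OF ok]) (use ar n in \<open>auto intro: dn3\<close>)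
  hence r: "\<psi> (pbasis [k, k+1, k]) = 0" using IH by simp
  have vr: "(vertex_rel n k :: nat list \<Rightarrow> 'a) \<in> Istar n" by (rule Istar_gen_vr[OF n]) (use k in auto)
  have K1: "(pbasis [k,k-1,k] :: nat list \<Rightarrow> 'a) \<in> KQ n" "(pbasis [k,k+1,k] :: nat list \<Rightarrow> 'a) \<in> KQ n"
    using ar k by (auto intro!: KQ_pbasis simp: dn_path_def dn_arrow_def)
  have "\<psi> (pbasis [k,k-1,k]) = 0"
    by (rule psi_Istar_padd[OF ok K1(2) K1(1)])
      (use vr VRk[OF n k, where 'a='a] r in \<open>auto simp: padd_def add.commute\<close>)
  thus ?case using e1 by simp
qed

lemma psi_soc:
  fixes \<psi> :: "(nat list \<Rightarrow> 'a::field) \<Rightarrow> 'a"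
  assumes ok: "psi_ok n \<psi>" and n: "n \<ge> 4" and ev: "even n"
  shows "\<psi> (pbasis (map Wv [0..<NN n + 1])) = 0"
proof -
  define N where "N = NN n"
  have N4: "N mod 4 = 0" "N \<ge> 4" using NN_mod[OF n ev] n by (auto simp: N_def NN_def)
  have WN: "Wv N = 0" "Wv (N+1) = 2" "Wv (N+2) = 1" "Wv (N+3) = 2"
    using N4 by (simp_all add: Wv_def) presburger+
  have dp: "dn_path n [a,b]" if "dn_arrow n a b" for a b using dn3[OF n that] .
  have ar: "dn_arrow n 2 0" "dn_arrow n 0 2" "dn_arrow n 2 1" "dn_arrow n 1 2" "dn_arrow n 2 3" "dn_arrow n 3 2"
    using n by (auto simp: dn_arrow_def dn_edge_def)
  have a: "\<psi> (pbasis [2,0,2]) = 0"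
  proof -
    have "\<psi> (pbasis ([2,0] @ tl [0,2])) = \<psi> (pbasis ([0,2] @ tl [2,0]))"
      by (rule psi_rot[OF ok]) (use ar in \<open>auto intro: dp\<close>)
    moreover have "(pbasis [0,2,0] :: nat list \<Rightarrow> 'a) \<in> Istar n"
      using Istar_gen_vr[OF n, of 0, where 'a='a] VR0[OF n, where 'a='a] n by simp
    ultimately show ?thesis using psi_Istar[OF ok] by simp
  qed
  have b: "\<psi> (pbasis [2,1,2]) = 0"
  proof -
    have "\<psi> (pbasis ([2,1] @ tl [1,2])) = \<psi> (pbasis ([1,2] @ tl [2,1]))"
      by (rule psi_rot[OF ok]) (use ar in \<open>auto intro: dp\<close>)
    moreover have "(pbasis [1,2,1] :: nat list \<Rightarrow> 'a) \<in> Istar n"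
      using Istar_gen_vr[OF n, of 1, where 'a='a] VR1[OF n, where 'a='a] n by simp
    ultimately show ?thesis using psi_Istar[OF ok] by simp
  qed
  have c: "\<psi> (pbasis [2,3,2]) = 0"
  proof -
    have "\<psi> (pbasis ([2,3] @ tl [3,2])) = \<psi> (pbasis ([3,2] @ tl [2,3]))"
      by (rule psi_rot[OF ok]) (use ar in \<open>auto intro: dp\<close>)
    moreover have "\<psi> (pbasis [n-1-(n-4), n-2-(n-4), n-1-(n-4)]) = 0"
      by (rule psi_chain[OF ok n]) simp
    moreover have "[n-1-(n-4), n-2-(n-4), n-1-(n-4)] = [3,2,3]" using n by simp
    ultimately show ?thesis by simp
  qed
  have KX: "(pbasis [2,0,2] :: nat list \<Rightarrow> 'a) \<in> KQ n" "(pbasis [2,1,2] :: nat list \<Rightarrow> 'a) \<in> KQ n"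
    "(pbasis [2,3,2] :: nat list \<Rightarrow> 'a) \<in> KQ n"
    using ar n by (auto intro!: KQ_pbasis simp: dn_path_def)
  have d: "\<psi> (vertex_rel n 2) = 0"
  proof -
    have e: "(vertex_rel n 2 :: nat list \<Rightarrow> 'a) = padd (padd (pbasis [2,0,2]) (pbasis [2,1,2])) (pbasis [2,3,2])"
      by (rule VR2[OF n])
    have "\<psi> (padd (padd (pbasis [2,0,2]) (pbasis [2,1,2])) (pbasis [2,3,2])) =
        \<psi> (pbasis [2,0,2]) + \<psi> (pbasis [2,1,2]) + \<psi> (pbasis [2,3,2])"
      using ok KX KQ_padd unfolding psi_ok_def by metis
    thus ?thesis using a b c e by simp
  qed
  define k where "k = n div 2 - 1"
  have k: "k \<ge> 1" "4 * k + 4 = N + 4" using n ev by (auto simp: k_def N_def NN_def elim!: evenE)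
  have g2: "padd (vertex_rel n 2)
        (ppow n (pmult (pmult (pbasis [2,0]) (pbasis [0,2])) (pmult (pbasis [2,1]) (pbasis [1,2])))
           (n div 2 - 1)) \<in> (Istar n :: (nat list \<Rightarrow> 'a) set)"
    unfolding Istar_def by (rule gen_ideal_gen) (simp add: Istar_gens_def)
  have pw: "ppow n (pmult (pmult (pbasis [2,0]) (pbasis [0,2])) (pmult (pbasis [2,1]) (pbasis [1,2])))
           (n div 2 - 1) = (pbasis (map Wv [3..<N+4]) :: nat list \<Rightarrow> 'a)"
    unfolding XY_eq using ppow_xy[OF n k(1), where 'a='a] k by (simp add: k_def)
  have KW: "(pbasis (map Wv [a..<b]) :: nat list \<Rightarrow> 'a) \<in> KQ n" if "a < b" for a b
    using that by (intro KQ_pbasis dn_path_Wv n)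
  have e: "\<psi> (pbasis (map Wv [3..<N+4])) = 0"
    by (rule psi_Istar_padd[OF ok vertex_rel_KQ KW _ d]) (use g2 pw in simp_all)
  have L1: "[2,1,2] @ tl (map Wv [3..<N+2]) = map Wv [1..<N+2]"
  proof -
    have "[1..<N+2] = [1..<3] @ [3..<N+2]" using N4 upt_split[of 1 3 "N+2"] by simp
    moreover have "[1..<3] = [1,2]" by (simp add: upt_rec)
    moreover have "map Wv [3..<N+2] = 2 # tl (map Wv [3..<N+2])"
      using N4 by (simp add: upt_conv_Cons Wv_def)
    ultimately show ?thesis by (simp add: Wv_def)
  qed
  have L2: "map Wv [3..<N+2] @ tl [2,1,2] = map Wv [3..<N+4]"
  proof -
    have a1: "[3..<N+4] = [3..<N+2] @ [N+2..<N+4]" using N4 upt_split[of 3 "N+2" "N+4"] by simp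
    have a2: "[N+2..<N+4] = [N+2, N+3]" by (simp add: upt_rec)
    show ?thesis unfolding a1 a2 using WN by (simp del: upt_Suc)
  qed
  have lastW: "last (map Wv [a..<Suc b]) = Wv b" if "a \<le> b" for a b
    using that by (simp add: last_map del: upt_Suc)
  have hdW: "hd (map Wv [a..<b]) = Wv a" if "a < b" for a b
    using that by (simp add: upt_conv_Cons)
  have f: "\<psi> (pbasis (map Wv [1..<N+2])) = 0"
  proof -
    have "\<psi> (pbasis ([2,1,2] @ tl (map Wv [3..<N+2]))) = \<psi> (pbasis (map Wv [3..<N+2] @ tl [2,1,2]))"
    proof (rule psi_rot[OF ok])
      show "dn_path n [2,1,2]" using ar by (auto simp: dn_path_def dn_arrow_def)
      show "dn_path n (map Wv [3..<N+2])" using N4 by (intro dn_path_Wv n) simp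
      show "last [2,1,2] = hd (map Wv [3..<N+2])" using N4 hdW[of 3 "N+2"] by (simp add: Wv_def)
      show "last (map Wv [3..<N+2]) = hd [2,1,2]" using N4 lastW[of 3 "N+1"] WN by simp
    qed
    thus ?thesis using L1 L2 e by simp
  qed
  have L3: "[0,2] @ tl (map Wv [1..<N+1]) = map Wv [0..<N+1]"
  proof -
    have "[0..<N+1] = [0..<1] @ [1..<N+1]" using N4 upt_split[of 0 1 "N+1"] by simp
    moreover have "map Wv [1..<N+1] = 2 # tl (map Wv [1..<N+1])"
      using N4 by (simp add: upt_conv_Cons Wv_def)
    ultimately show ?thesis by (simp add: Wv_def)
  qed
  have L4: "map Wv [1..<N+1] @ tl [0,2] = map Wv [1..<N+2]"
    using WN by simp
  have "\<psi> (pbasis ([0,2] @ tl (map Wv [1..<N+1]))) = \<psi> (pbasis (map Wv [1..<N+1] @ tl [0,2]))"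
  proof (rule psi_rot[OF ok])
    show "dn_path n [0,2]" using ar by (auto intro: dp)
    show "dn_path n (map Wv [1..<N+1])" using N4 by (intro dn_path_Wv n) simp
    show "last [0,2] = hd (map Wv [1..<N+1])" using N4 hdW[of 1 "N+1"] by (simp add: Wv_def)
    show "last (map Wv [1..<N+1]) = hd [0,2]" using N4 lastW[of 1 N] WN by simp
  qed
  thus ?thesis using L3 L4 f by (simp add: N_def)
qed



lemma sum_Istar:
  assumes "finite Q" "\<forall>q\<in>Q. F q \<in> (Istar n :: (nat list \<Rightarrow> 'a::field) set)"
  shows "(\<lambda>w. \<Sum>q\<in>Q. c q * F q w) \<in> Istar n"
  using assms
proof (induction Q rule: finite_induct)
  case empty
  have "(\<lambda>w. \<Sum>q\<in>{}. c q * F q w) = (pzero :: nat list \<Rightarrow> 'a)" by (rule ext) (simp add: pzero_def)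
  thus ?case unfolding Istar_def by (simp add: gen_ideal_pzero)
next
  case (insert q0 Q)
  have "(\<lambda>w. \<Sum>q\<in>insert q0 Q. c q * F q w) = padd (psmult (c q0) (F q0)) (\<lambda>w. \<Sum>q\<in>Q. c q * F q w)"
    using insert.hyps by (auto simp: padd_def psmult_def)
  thus ?case using insert unfolding Istar_def by (simp add: gen_ideal_padd gen_ideal_psmult)
qed

lemma soc_right:
  assumes n: "n \<ge> 4" and ev: "even n" and a: "a \<in> KQ n"
  shows "(\<lambda>w. pmult (pbasis (map Wv [0..<NN n + 1])) a w - a [0] * pbasis (map Wv [0..<NN n + 1]) w)
     \<in> (Istar n :: (nat list \<Rightarrow> 'a::field) set)"
proof -
  define N where "N = NN n"
  define W where "W = map Wv [0..<N + 1]"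
  have N4: "N mod 4 = 0" using NN_mod[OF n ev] by (simp add: N_def)
  have WN: "Wv N = 0" "Wv (N+1) = 2" using N4 by (simp_all add: Wv_def) presburger
  have Wne: "W \<noteq> []" by (simp add: W_def)
  have lastW: "last W = 0" using WN by (simp add: W_def last_map del: upt_Suc)
  have tW: "W @ [2] = map Wv [0..<N + 2]" using WN by (simp add: W_def)
  have tI: "(pbasis (W @ [2]) :: nat list \<Rightarrow> 'a) \<in> Istar n"
    using socle_cat_Istar[OF n ev] unfolding tW N_def .
  have fa: "finite (supp a)" using a by (simp add: KQ_finite)
  let ?V = "supp a \<union> {[0]}"
  have fV: "finite ?V" using fa by simp
  let ?Q = "{q \<in> supp a. q \<noteq> [0] \<and> q \<noteq> [] \<and> hd q = 0}"
  have fQ: "finite ?Q" using fa by simp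
  let ?T = "\<lambda>w q. if cok W q \<and> W @ tl q = w then a q else 0"
  have eq: "pmult (pbasis W) a w - a [0] * pbasis W w = (\<Sum>q\<in>?Q. a q * pbasis (W @ tl q) w)" for w
  proof -
    have "pmult (pbasis W) a w = (\<Sum>p\<in>{W}. \<Sum>q\<in>?V. if cok p q \<and> p @ tl q = w then pbasis W p * a q else 0)"
      by (rule pmult_expand) (use fV in \<open>auto simp: supp_def pbasis_def\<close>)
    also have "\<dots> = (\<Sum>q\<in>?V. ?T w q)"
    proof -
      have pW: "(pbasis W W :: 'a) = 1" by (simp add: pbasis_def)
      have "(\<Sum>p\<in>{W}. \<Sum>q\<in>?V. if cok p q \<and> p @ tl q = w then pbasis W p * a q else 0) =
         (\<Sum>q\<in>?V. if cok W q \<and> W @ tl q = w then pbasis W W * a q else 0)" by simp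
      also have "\<dots> = (\<Sum>q\<in>?V. ?T w q)" by (rule sum.cong[OF refl]) (simp add: pW)
      finally show ?thesis .
    qed
    also have "\<dots> = ?T w [0] + (\<Sum>q\<in>?V - {[0]}. ?T w q)" using fV by (subst sum.remove) auto
    also have "?T w [0] = a [0] * pbasis W w" using Wne lastW by (auto simp: cok_def pbasis_def)
    also have "(\<Sum>q\<in>?V - {[0]}. ?T w q) = (\<Sum>q\<in>?Q. ?T w q)"
      by (rule sum.mono_neutral_right) (use fV lastW in \<open>auto simp: cok_def supp_def\<close>)
    also have "\<dots> = (\<Sum>q\<in>?Q. a q * pbasis (W @ tl q) w)"
      using lastW Wne by (intro sum.cong) (auto simp: cok_def pbasis_def)
    finally show ?thesis by simp
  qed
  have mem: "\<forall>q\<in>?Q. (pbasis (W @ tl q) :: nat list \<Rightarrow> 'a) \<in> Istar n"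
  proof
    fix q assume q: "q \<in> ?Q"
    hence dq: "dn_path n q" using a by (auto simp: KQ_def supp_def)
    obtain q' where q': "q = 0 # q'" using q by (cases q) auto
    have q'ne: "q' \<noteq> []" using q q' by auto
    have dq': "dn_path n q'" using dn_path_suffix[of n "[0]" q'] dq q' q'ne by simp
    have "dn_arrow n 0 (hd q')" using dq q' q'ne by (cases q') (auto simp: dn_path_def)
    hence h2: "hd q' = 2" using n by (simp add: adj)
    have "W @ tl q = (W @ [2]) @ tl q'" using q' q'ne h2 by (cases q') auto
    hence "pbasis (W @ tl q) = (pmult (pbasis (W @ [2])) (pbasis q') :: nat list \<Rightarrow> 'a)"
      using q'ne h2 by (simp add: pmult_pbasis)
    also have "\<dots> \<in> Istar n" using tI unfolding Istar_def by (rule gen_ideal_right[OF KQ_pbasis[OF dq']])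
    finally show "(pbasis (W @ tl q) :: nat list \<Rightarrow> 'a) \<in> Istar n" .
  qed
  have "(\<lambda>w. \<Sum>q\<in>?Q. a q * pbasis (W @ tl q) w) \<in> Istar n" by (rule sum_Istar[OF fQ mem])
  moreover have "(\<lambda>w. pmult (pbasis W) a w - a [0] * pbasis W w) = (\<lambda>w. \<Sum>q\<in>?Q. a q * pbasis (W @ tl q) w)"
    using eq by (rule ext)
  ultimately show ?thesis by (simp add: W_def N_def)
qed

theorem mainTheorem16:
  fixes n :: nat
  assumes "n \<ge> 4" and "even n" and "CHAR('a::alg_closed_field) = 2"
  shows "\<not> symmetric_quotient n (Istar n :: (nat list \<Rightarrow> 'a) set)"
proof
  note n = assms(1) and ev = assms(2) and ch = assms(3)
  assume "symmetric_quotient n (Istar n :: (nat list \<Rightarrow> 'a) set)"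
  then obtain \<psi> :: "(nat list \<Rightarrow> 'a) \<Rightarrow> 'a" where
    add: "\<forall>f\<in>KQ n. \<forall>g\<in>KQ n. \<psi> (padd f g) = \<psi> f + \<psi> g" and
    sm: "\<forall>c. \<forall>f\<in>KQ n. \<psi> (psmult c f) = c * \<psi> f" and
    van: "\<forall>f\<in>Istar n. \<psi> f = 0" and
    tr: "\<forall>a\<in>KQ n. \<forall>b\<in>KQ n. \<psi> (pmult a b) = \<psi> (pmult b a)" and
    nd: "\<forall>J. (is_left_ideal n J \<or> is_right_ideal n J) \<and> Istar n \<subseteq> J \<and> (\<forall>f\<in>J. \<psi> f = 0)
              \<longrightarrow> J \<subseteq> Istar n"
    using \<open>symmetric_quotient n (Istar n :: (nat list \<Rightarrow> 'a) set)\<close>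
    unfolding symmetric_quotient_def by (elim exE conjE) (rule that)
  have ok: "psi_ok n \<psi>" unfolding psi_ok_def using add sm van tr by blast
  define W where "W = map Wv [0..<NN n + 1]"
  define s where "s = (pbasis W :: nat list \<Rightarrow> 'a)"
  have sK: "s \<in> KQ n" unfolding s_def W_def by (intro KQ_pbasis dn_path_Wv n) simp
  have ps: "\<psi> s = 0" unfolding s_def W_def by (rule psi_soc[OF ok n ev])
  have sI: "s \<notin> Istar n"
  proof
    assume "s \<in> Istar n"
    hence "s \<in> J0 n" using Istar_J0[OF n ev ch] by blast
    hence "phi n s (0,0) (NN n, 0) = 0" by (simp add: J0_def)
    moreover have "phi n s (0,0) (NN n, 0) = 1"
    proof -
      have "run n (0,0) W = Some (NN n, 0)" unfolding W_def by (rule Rsoc) simp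
      thus ?thesis unfolding s_def by (simp add: phi_pbasis)
    qed
    ultimately show False by simp
  qed
  have IK: "Istar n \<subseteq> KQ n" by (rule Istar_KQ[OF n])
  define J where "J = {f \<in> KQ n. \<exists>c. (\<lambda>w. f w - c * s w) \<in> (Istar n :: (nat list \<Rightarrow> 'a) set)}"
  have Istar_pz: "(pzero :: nat list \<Rightarrow> 'a) \<in> Istar n" unfolding Istar_def by (rule gen_ideal_pzero)
  have Ipadd: "f \<in> Istar n \<Longrightarrow> g \<in> Istar n \<Longrightarrow> padd f g \<in> Istar n" for f g :: "nat list \<Rightarrow> 'a"
    unfolding Istar_def by (rule gen_ideal_padd)
  have Ipsm: "f \<in> Istar n \<Longrightarrow> psmult c f \<in> Istar n" for f :: "nat list \<Rightarrow> 'a" and c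
    unfolding Istar_def by (rule gen_ideal_psmult)
  have decomp: "f = padd (\<lambda>w. f w - c * s w) (psmult c s)" for f :: "nat list \<Rightarrow> 'a" and c
    by (rule ext) (simp add: padd_def psmult_def)
  have sub: "is_subspace n J"
    unfolding is_subspace_def
  proof (intro conjI ballI allI)
    show "J \<subseteq> KQ n" unfolding J_def by blast
    have "(\<lambda>w. pzero w - 0 * s w) = (pzero :: nat list \<Rightarrow> 'a)" by (rule ext) (simp add: pzero_def)
    thus "pzero \<in> J" unfolding J_def using KQ_pzero Istar_pz by (auto intro!: exI[of _ 0])
  next
    fix f g assume f: "f \<in> J" and g: "g \<in> J"
    then obtain c d where c: "(\<lambda>w. f w - c * s w) \<in> Istar n" and d: "(\<lambda>w. g w - d * s w) \<in> Istar n"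
      unfolding J_def by blast
    have "(\<lambda>w. padd f g w - (c + d) * s w) = padd (\<lambda>w. f w - c * s w) (\<lambda>w. g w - d * s w)"
      by (rule ext) (simp add: padd_def algebra_simps)
    hence "(\<lambda>w. padd f g w - (c + d) * s w) \<in> Istar n" using Ipadd[OF c d] by simp
    thus "padd f g \<in> J" using f g KQ_padd unfolding J_def by blast
  next
    fix e f assume f: "f \<in> J"
    then obtain c where c: "(\<lambda>w. f w - c * s w) \<in> Istar n" unfolding J_def by blast
    have "(\<lambda>w. psmult e f w - (e * c) * s w) = psmult e (\<lambda>w. f w - c * s w)"
      by (rule ext) (simp add: psmult_def algebra_simps)
    hence "(\<lambda>w. psmult e f w - (e * c) * s w) \<in> Istar n" using Ipsm[OF c] by simp
    thus "psmult e f \<in> J" using f KQ_psmult unfolding J_def by blast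
  qed
  have rmul: "\<forall>a\<in>(KQ n :: (nat list \<Rightarrow> 'a) set). \<forall>f\<in>J. pmult f a \<in> J"
  proof (intro ballI)
    fix a f :: "nat list \<Rightarrow> 'a" assume a: "a \<in> KQ n" and f: "f \<in> J"
    then obtain c where c: "(\<lambda>w. f w - c * s w) \<in> Istar n" and fK: "f \<in> KQ n" unfolding J_def by blast
    define i where "i = (\<lambda>w. f w - c * s w)"
    have iI: "i \<in> Istar n" using c by (simp add: i_def)
    have iK: "i \<in> KQ n" using iI IK by blast
    have fi: "f = padd i (psmult c s)" unfolding i_def by (rule decomp)
    have fin: "finite (supp i)" "finite (supp (psmult c s))" "finite (supp a)" "finite (supp s)"
      using iK sK a KQ_psmult[OF sK, of c] by (simp_all add: KQ_finite)
    have e1: "pmult (padd i (psmult c s)) a = padd (pmult i a) (pmult (psmult c s) a)"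
      by (rule pmult_padd_left[OF fin(1,2,3)])
    have e2: "pmult (psmult c s) a = psmult c (pmult s a)" by (rule pmult_psmult_left[OF fin(4,3)])
    have "pmult f a = padd (pmult i a) (psmult c (pmult s a))"
      unfolding fi e1 e2 ..
    define r where "r = (\<lambda>w. pmult s a w - a [0] * s w)"
    have rI: "r \<in> Istar n" unfolding r_def s_def W_def by (rule soc_right[OF n ev a])
    have "(\<lambda>w. pmult f a w - (c * a [0]) * s w) = padd (pmult i a) (psmult c r)"
      unfolding \<open>pmult f a = padd (pmult i a) (psmult c (pmult s a))\<close> r_def
      by (rule ext) (simp add: padd_def psmult_def algebra_simps)
    also have "\<dots> \<in> Istar n"
    proof (rule Ipadd[OF _ Ipsm[OF rI]])
      show "pmult i a \<in> Istar n" using iI unfolding Istar_def by (rule gen_ideal_right[OF a])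
    qed
    finally show "pmult f a \<in> J" unfolding J_def using KQ_pmult[OF fK a] by blast
  qed
  have rJ: "is_right_ideal n J" unfolding is_right_ideal_def using sub rmul by blast
  have IJ: "Istar n \<subseteq> J"
  proof
    fix i :: "nat list \<Rightarrow> 'a" assume i: "i \<in> Istar n"
    have "(\<lambda>w. i w - 0 * s w) = i" by (rule ext) simp
    thus "i \<in> J" unfolding J_def using i IK by (auto intro!: exI[of _ 0])
  qed
  have zJ: "\<forall>f\<in>J. \<psi> f = 0"
  proof
    fix f :: "nat list \<Rightarrow> 'a" assume f: "f \<in> J"
    then obtain c where c: "(\<lambda>w. f w - c * s w) \<in> Istar n" unfolding J_def by blast
    have "\<psi> f = \<psi> (padd (\<lambda>w. f w - c * s w) (psmult c s))" using decomp[of f c] by simp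
    also have "\<dots> = \<psi> (\<lambda>w. f w - c * s w) + \<psi> (psmult c s)"
      using add c IK KQ_psmult[OF sK] by blast
    also have "\<dots> = 0" using van c sm sK ps by simp
    finally show "\<psi> f = 0" .
  qed
  have "J \<subseteq> Istar n" using nd rJ IJ zJ by blast
  moreover have "s \<in> J"
  proof -
    have "(\<lambda>w. s w - 1 * s w) = (pzero :: nat list \<Rightarrow> 'a)" by (rule ext) (simp add: pzero_def)
    thus ?thesis unfolding J_def using sK Istar_pz by (auto intro!: exI[of _ 1])
  qed
  ultimately show False using sI by blast
qed


end
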